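(* Let $\mathcal C$ be a Clifford circuit on $n$ qubits with $m$ Pauli measurements. The set $\mathcal O(\mathcal C)\subseteq\mathbb Z_2^m$ of all outcome bit-strings that occur with nonzero probability for some input state of the circuit is an affine subspace of $\mathbb Z_2^m$. Moreover, $\mathcal O(\mathcal C)$ is exactly the set of $o\in\mathbb Z_2^m$ satisfying all the affine equations in the list $R$ returned by the Outcome-Code Algorithm described in the context.
   Context: A Clifford circuit $\mathcal C$ on $n$ qubits is a finite sequence $(C_1,\dots,C_s)$ of operations, each either a unitary Clifford gate or the measurement of a Hermitian $n$-qubit Pauli operator. Each $C_i$ has a level $\mathrm{level}(C_i)\in\{1,2,\dots\}$; operations of equal level have disjoint supports and $i\le j$ implies $\mathrm{level}(C_i)\le\mathrm{level}(C_j)$. No constraint is placed on the input state. The circuit has $m$ measurements; listed in circuit order, the $j$-th one measures the operator $S_j$. An execution produces an outcome bit-string $o\in\mathbb Z_2^m$, with $o_j=0$ if the measurement of $S_j$ yields eigenvalue $+1$ and $o_j=1$ if it yields $-1$. Outcome-Code Algorithm. Maintain a list $\mathcal S$ of pairs $(T,K_T)$ where $T$ is a Hermitian $n$-qubit Pauli operator with sign $\pm1$ and $K_T\subseteq\{1,\dots,m\}$, initially empty, and a list $R$ of affine equations in $o_1,\dots,o_m$, initially empty. Process $C_1,\dots,C_s$ in order. If $C_i$ is a unitary $U$, replace each $T$ by $UTU^{-1}$ (keeping $K_T$). If $C_i$ is the measurement of $S_j$: (a) if $S_j$ or $-S_j$ lies in the group $\langle\mathcal S\rangle$ generated by the operators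 $T$ in $\mathcal S$, write $\epsilon S_j=\prod_{T\in\mathcal T}T$ with $\mathcal T\subseteq\mathcal S$ and $\epsilon\in\{\pm1\}$, let $K_j$ be the symmetric difference of the sets $K_T$, $T\in\mathcal T$, and add to $R$ the equation $o_j+\sum_{k\in K_j}o_k=0$ if $\epsilon=+1$, respectively $o_j+\sum_{k\in K_j}o_k=1$ if $\epsilon=-1$; (b) otherwise, if some $T\in\mathcal S$ anticommutes with $S_j$, replace every other $T'\in\mathcal S$ that anticommutes with $S_j$ by $(TT',K_T\triangle K_{T'})$ and then remove $(T,K_T)$ from $\mathcal S$; finally (in case (b)) add $(S_j,\{j\})$ to $\mathcal S$. Return $R$. *)

theory Defs
  imports Complex_Main "Jordan_Normal_Form.Schur_Decomposition"
begin

text \<open>Computational basis of n qubits: indices x < 2^n, qubit i of x is bit i of x.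
  pauli_XZ n a b is the tensor product of X^(a i) Z^(b i) over the qubits i < n,
  i.e. it maps the basis vector |c> to (-1)^(b.c) |c xor a>.\<close>

definition pauli_XZ :: "nat \<Rightarrow> (nat \<Rightarrow> bool) \<Rightarrow> (nat \<Rightarrow> bool) \<Rightarrow> complex mat" where
  "pauli_XZ n a b = mat (2^n) (2^n) (\<lambda>(r, c).
     if (\<forall>i<n. bit r i = (bit c i \<noteq> a i))
     then (if even (card {i. i < n \<and> b i \<and> bit c i}) then 1 else -1)
     else 0)"

text \<open>Hermitian n-qubit Pauli operators (with sign +1 or -1):
  +-(i^(a.b)) X^a Z^b, which is the tensor product of I, X, Y = iXZ, Z times a sign.\<close>
definition herm_pauli :: "nat \<Rightarrow> complex mat \<Rightarrow> bool" where
  "herm_pauli n P \<longleftrightarrow> (\<exists>s a b. (s = 1 \<or> s = -1) \<and>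
      P = (s * \<i> ^ card {i. i < n \<and> a i \<and> b i}) \<cdot>\<^sub>m pauli_XZ n a b)"

definition unitary_n :: "nat \<Rightarrow> complex mat \<Rightarrow> bool" where
  "unitary_n n U \<longleftrightarrow> U \<in> carrier_mat (2^n) (2^n) \<and>
      U * mat_adjoint U = 1\<^sub>m (2^n) \<and> mat_adjoint U * U = 1\<^sub>m (2^n)"

definition clifford_gate :: "nat \<Rightarrow> complex mat \<Rightarrow> bool" where
  "clifford_gate n U \<longleftrightarrow> unitary_n n U \<and>
      (\<forall>P. herm_pauli n P \<longrightarrow> herm_pauli n (U * P * mat_adjoint U))"

datatype operation = Gate "complex mat" | Meas "complex mat"

definition clifford_circuit :: "nat \<Rightarrow> operation list \<Rightarrow> bool" where
  "clifford_circuit n C \<longleftrightarrow> (\<forall>op \<in> set C. case op of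
      Gate U \<Rightarrow> clifford_gate n U | Meas S \<Rightarrow> herm_pauli n S)"

fun num_meas :: "operation list \<Rightarrow> nat" where
  "num_meas [] = 0"
| "num_meas (Gate U # C) = num_meas C"
| "num_meas (Meas S # C) = Suc (num_meas C)"

text \<open>Outcome bit-strings in Z_2^m: functions w with w k = False for k >= m.
  Measurements are numbered 0, 1, ..., m-1 in circuit order; w j = True means eigenvalue -1.\<close>
definition bitstrings :: "nat \<Rightarrow> (nat \<Rightarrow> bool) set" where
  "bitstrings m = {w. \<forall>k\<ge>m. \<not> w k}"

definition projector :: "nat \<Rightarrow> complex mat \<Rightarrow> bool \<Rightarrow> complex mat" where
  "projector n S b = (1/2 :: complex) \<cdot>\<^sub>m (1\<^sub>m (2^n) + (if b then -1 else 1) \<cdot>\<^sub>m S)"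

text \<open>Kraus operator of the whole circuit for outcome string w
  (j = index of the next measurement).\<close>
fun kraus :: "nat \<Rightarrow> operation list \<Rightarrow> nat \<Rightarrow> (nat \<Rightarrow> bool) \<Rightarrow> complex mat" where
  "kraus n [] j w = 1\<^sub>m (2^n)"
| "kraus n (Gate U # C) j w = kraus n C j w * U"
| "kraus n (Meas S # C) j w = kraus n C (Suc j) w * projector n S (w j)"

definition vnorm2 :: "complex vec \<Rightarrow> real" where
  "vnorm2 v = (\<Sum>i<dim_vec v. (cmod (v $ i))^2)"

definition outcome_prob :: "nat \<Rightarrow> operation list \<Rightarrow> (nat \<Rightarrow> bool) \<Rightarrow> complex vec \<Rightarrow> real" where
  "outcome_prob n C w psi = vnorm2 (kraus n C 0 w *\<^sub>v psi)"

definition outcome_set :: "nat \<Rightarrow> operation list \<Rightarrow> (nat \<Rightarrow> bool) set" where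
  "outcome_set n C = {w \<in> bitstrings (num_meas C).
      \<exists>psi. psi \<in> carrier_vec (2^n) \<and> vnorm2 psi = 1 \<and> outcome_prob n C w psi \<noteq> 0}"

definition bxor :: "(nat \<Rightarrow> bool) \<Rightarrow> (nat \<Rightarrow> bool) \<Rightarrow> nat \<Rightarrow> bool" where
  "bxor x y = (\<lambda>k. x k \<noteq> y k)"

definition linear_subspace2 :: "nat \<Rightarrow> (nat \<Rightarrow> bool) set \<Rightarrow> bool" where
  "linear_subspace2 m V \<longleftrightarrow> V \<subseteq> bitstrings m \<and> (\<lambda>_. False) \<in> V \<and>
      (\<forall>x\<in>V. \<forall>y\<in>V. bxor x y \<in> V)"

definition affine_subspace2 :: "nat \<Rightarrow> (nat \<Rightarrow> bool) set \<Rightarrow> bool" where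
  "affine_subspace2 m A \<longleftrightarrow> (\<exists>a V. a \<in> bitstrings m \<and> linear_subspace2 m V \<and>
      A = (bxor a) ` V)"

text \<open>An affine equation (K, c) stands for  sum_{k in K} o_k = c  over Z_2.\<close>
definition sat_eq :: "(nat \<Rightarrow> bool) \<Rightarrow> nat set \<times> bool \<Rightarrow> bool" where
  "sat_eq w e \<longleftrightarrow> odd (card {k \<in> fst e. w k}) = snd e"

section \<open>The Outcome-Code Algorithm (nondeterministic choices modelled by a relation)\<close>

inductive_set gen_group :: "nat \<Rightarrow> complex mat list \<Rightarrow> complex mat set" for n Ts where
  one: "1\<^sub>m (2^n) \<in> gen_group n Ts"
| gen: "T \<in> set Ts \<Longrightarrow> T \<in> gen_group n Ts"
| mult: "A \<in> gen_group n Ts \<Longrightarrow> B \<in> gen_group n Ts \<Longrightarrow> A * B \<in> gen_group n Ts"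
| inv: "A \<in> gen_group n Ts \<Longrightarrow> mat_adjoint A \<in> gen_group n Ts"

definition prod_mats :: "nat \<Rightarrow> complex mat list \<Rightarrow> complex mat" where
  "prod_mats n Ts = foldr (*) Ts (1\<^sub>m (2^n))"

definition symdiff_list :: "nat set list \<Rightarrow> nat set" where
  "symdiff_list Ks = foldr (\<lambda>K A. (K - A) \<union> (A - K)) Ks {}"

definition symd :: "nat set \<Rightarrow> nat set \<Rightarrow> nat set" where
  "symd A B = (A - B) \<union> (B - A)"

definition anticommute :: "complex mat \<Rightarrow> complex mat \<Rightarrow> bool" where
  "anticommute A B \<longleftrightarrow> A * B = - (B * A)"

type_synonym alg_state = "(complex mat \<times> nat set) list \<times> (nat set \<times> bool) list \<times> nat"

text \<open>One step; the third component counts measurements processed so far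
  (so the current measurement has index j).\<close>
inductive alg_step :: "nat \<Rightarrow> alg_state \<Rightarrow> operation \<Rightarrow> alg_state \<Rightarrow> bool" for n where
  gate: "alg_step n (SL, R, j) (Gate U)
           (map (\<lambda>(T, K). (U * T * mat_adjoint U, K)) SL, R, j)"
| meas_a: "\<lbrakk> S \<in> gen_group n (map fst SL) \<or> - S \<in> gen_group n (map fst SL);
            \<epsilon> = 1 \<or> \<epsilon> = -1; I \<subseteq> {..<length SL};
            \<epsilon> \<cdot>\<^sub>m S = prod_mats n (map fst (nths SL I)) \<rbrakk> \<Longrightarrow>
          alg_step n (SL, R, j) (Meas S)
            (SL, R @ [(symd {j} (symdiff_list (map snd (nths SL I))), \<epsilon> = -1)], Suc j)"
| meas_b1: "\<lbrakk> \<not> (S \<in> gen_group n (map fst SL) \<or> - S \<in> gen_group n (map fst SL));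
             i < length SL; SL ! i = (T, K); anticommute T S \<rbrakk> \<Longrightarrow>
          alg_step n (SL, R, j) (Meas S)
            (map (\<lambda>(T', K'). if anticommute T' S then (T * T', symd K K') else (T', K'))
                 (take i SL @ drop (Suc i) SL) @ [(S, {j})], R, Suc j)"
| meas_b2: "\<lbrakk> \<not> (S \<in> gen_group n (map fst SL) \<or> - S \<in> gen_group n (map fst SL));
             \<forall>T\<in>set (map fst SL). \<not> anticommute T S \<rbrakk> \<Longrightarrow>
          alg_step n (SL, R, j) (Meas S) (SL @ [(S, {j})], R, Suc j)"

inductive alg_run :: "nat \<Rightarrow> alg_state \<Rightarrow> operation list \<Rightarrow> (nat set \<times> bool) list \<Rightarrow> bool" for n where
  run_nil: "alg_run n (SL, R, j) [] R"
| run_cons: "alg_step n st op st' \<Longrightarrow> alg_run n st' C R \<Longrightarrow> alg_run n st (op # C) R"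

definition outcome_code :: "nat \<Rightarrow> operation list \<Rightarrow> (nat set \<times> bool) list \<Rightarrow> bool" where
  "outcome_code n C R \<longleftrightarrow> alg_run n ([], [], 0) C R"

end

theory Submission
  imports Defs
begin


definition sgs :: "nat set \<Rightarrow> complex" where
  "sgs A = (if even (card A) then 1 else -1)"

lemma card_symd_even:
  assumes "finite A" "finite B"
  shows "even (card ((A - B) \<union> (B - A))) \<longleftrightarrow> (even (card A) \<longleftrightarrow> even (card B))"
proof -
  have "card ((A - B) \<union> (B - A)) = card (A - B) + card (B - A)"
    using assms by (intro card_Un_disjoint) auto
  moreover have "card A = card (A - B) + card (A \<inter> B)"
  proof -
    have "A = (A - B) \<union> (A \<inter> B)" by auto
    hence "card A = card ((A - B) \<union> (A \<inter> B))" by simp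
    also have "\<dots> = card (A - B) + card (A \<inter> B)"
      using assms by (intro card_Un_disjoint) auto
    finally show ?thesis .
  qed
  moreover have "card B = card (B - A) + card (A \<inter> B)"
  proof -
    have "B = (B - A) \<union> (A \<inter> B)" by auto
    hence "card B = card ((B - A) \<union> (A \<inter> B))" by simp
    also have "\<dots> = card (B - A) + card (A \<inter> B)"
      using assms by (intro card_Un_disjoint) auto
    finally show ?thesis .
  qed
  ultimately show ?thesis by presburger
qed

lemma sgs_symd: "finite A \<Longrightarrow> finite B \<Longrightarrow> sgs ((A - B) \<union> (B - A)) = sgs A * sgs B"
  using card_symd_even[of A B] unfolding sgs_def by auto

lemma sgs_sq[simp]: "sgs A * sgs A = 1"
  unfolding sgs_def by auto

lemma sgs_cases: "sgs A = 1 \<or> sgs A = -1"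
  unfolding sgs_def by auto

lemma sgs_pow: "sgs A = (-1) ^ card A"
  unfolding sgs_def by auto

fun flips :: "(nat \<Rightarrow> bool) \<Rightarrow> nat \<Rightarrow> nat \<Rightarrow> nat" where
  "flips a 0 c = c"
| "flips a (Suc i) c = (if a i then flip_bit i (flips a i c) else flips a i c)"

lemma bit_flips: "bit (flips a m c) i \<longleftrightarrow> (bit c i \<noteq> (i < m \<and> a i))"
  by (induction m) (auto simp: bit_flip_bit_iff less_Suc_eq)

lemma lt_pow_bits: "(x::nat) < 2^n \<longleftrightarrow> (\<forall>i\<ge>n. \<not> bit x i)"
proof
  assume x: "x < 2^n"
  show "\<forall>i\<ge>n. \<not> bit x i"
  proof (intro allI impI)
    fix i assume i: "n \<le> i"
    have "(2::nat)^n \<le> 2^i" using i by (simp add: power_increasing)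
    hence "x div 2^i = 0" using x by (intro div_less) (meson less_le_trans)
    thus "\<not> bit x i" by (simp add: bit_nat_def)
  qed
next
  assume h: "\<forall>i\<ge>n. \<not> bit x i"
  have "take_bit n x = x"
  proof (rule bit_eqI)
    fix i show "bit (take_bit n x) i = bit x i"
      using h by (cases "i < n") (auto simp: bit_take_bit_iff)
  qed
  thus "x < 2^n" by (simp add: take_bit_nat_eq_self_iff)
qed

lemma bits_eq_nat:
  assumes "(r::nat) < 2^n" "c < 2^n" "\<forall>i<n. bit r i = bit c i"
  shows "r = c"
proof (rule bit_eqI)
  fix i show "bit r i = bit c i"
    using assms lt_pow_bits[of r n] lt_pow_bits[of c n] by (cases "i < n") auto
qed

lemma flips_lt: "c < 2^n \<Longrightarrow> flips a n c < 2^n"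
  unfolding lt_pow_bits by (auto simp: bit_flips)

section \<open>Pauli matrices\<close>

lemma pauli_carrier[simp]: "pauli_XZ n a b \<in> carrier_mat (2^n) (2^n)"
  unfolding pauli_XZ_def by auto

lemma pauli_dim[simp]: "dim_row (pauli_XZ n a b) = 2^n" "dim_col (pauli_XZ n a b) = 2^n"
  unfolding pauli_XZ_def by auto

lemma pauli_index:
  "r < 2^n \<Longrightarrow> c < 2^n \<Longrightarrow> pauli_XZ n a b $$ (r, c) =
     (if (\<forall>i<n. bit r i = (bit c i \<noteq> a i)) then sgs {i. i < n \<and> b i \<and> bit c i} else 0)"
  unfolding pauli_XZ_def sgs_def by (simp only: index_mat case_prod_conv)

lemma smult_smult_mat: "x \<cdot>\<^sub>m (y \<cdot>\<^sub>m (A :: complex mat)) = (x * y) \<cdot>\<^sub>m A"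
  by (rule eq_matI) auto

lemma pauli_mult:
  "pauli_XZ n a b * pauli_XZ n a' b' =
     sgs {i. i < n \<and> b i \<and> a' i} \<cdot>\<^sub>m pauli_XZ n (\<lambda>i. a i \<noteq> a' i) (\<lambda>i. b i \<noteq> b' i)"
proof (rule eq_matI)
  fix r c assume r: "r < dim_row (sgs {i. i < n \<and> b i \<and> a' i} \<cdot>\<^sub>m pauli_XZ n (\<lambda>i. a i \<noteq> a' i) (\<lambda>i. b i \<noteq> b' i))"
    and c: "c < dim_col (sgs {i. i < n \<and> b i \<and> a' i} \<cdot>\<^sub>m pauli_XZ n (\<lambda>i. a i \<noteq> a' i) (\<lambda>i. b i \<noteq> b' i))"
  hence r: "r < 2^n" and c: "c < 2^n" by auto
  define k0 where "k0 = flips a' n c"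
  have k0: "k0 < 2^n" unfolding k0_def using flips_lt[OF c] .
  have bk0: "\<And>i. i < n \<Longrightarrow> bit k0 i = (bit c i \<noteq> a' i)" unfolding k0_def by (simp add: bit_flips)
  define P where "P = (\<forall>i<n. bit r i = (bit c i \<noteq> (a i \<noteq> a' i)))"
  define s1 where "s1 = sgs {i. i < n \<and> b i \<and> bit c i}"
  define s2 where "s2 = sgs {i. i < n \<and> b i \<and> a' i}"
  define s3 where "s3 = sgs {i. i < n \<and> b' i \<and> bit c i}"
  let ?A = "pauli_XZ n a b" and ?B = "pauli_XZ n a' b'"
  have S0: "(?A * ?B) $$ (r, c) = (\<Sum>k\<in>{0..<2^n}. ?A $$ (r, k) * ?B $$ (k, c))"
    using r c by (simp add: scalar_prod_def)
  have S1: "(\<Sum>k\<in>{0..<2^n}. ?A $$ (r, k) * ?B $$ (k, c)) = ?A $$ (r, k0) * ?B $$ (k0, c) + (\<Sum>k\<in>{0..<2^n} - {k0}. ?A $$ (r, k) * ?B $$ (k, c))"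
    using k0 by (subst sum.remove[of _ k0]) auto
  have S2: "(\<Sum>k\<in>{0..<2^n} - {k0}. ?A $$ (r, k) * ?B $$ (k, c)) = 0"
  proof (rule sum.neutral, intro ballI)
    fix k assume k: "k \<in> {0..<2^n} - {k0}"
    have "?B $$ (k, c) = 0"
    proof (rule ccontr)
      assume "?B $$ (k, c) \<noteq> 0"
      hence "\<forall>i<n. bit k i = (bit c i \<noteq> a' i)" using k c pauli_index[of k n c a' b'] by (auto split: if_splits)
      hence "k = k0" using k k0 bk0 by (intro bits_eq_nat[of k n k0]) auto
      thus False using k by auto
    qed
    thus "?A $$ (r, k) * ?B $$ (k, c) = 0" by simp
  qed
  have S3: "?B $$ (k0, c) = s3"
    using pauli_index[OF k0 c, of a' b'] bk0 unfolding s3_def by auto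
  have S4: "?A $$ (r, k0) = (if P then s1 * s2 else 0)"
  proof -
    have e1: "(\<forall>i<n. bit r i = (bit k0 i \<noteq> a i)) = P"
      using bk0 unfolding P_def by auto
    have e2: "{i. i < n \<and> b i \<and> bit k0 i} = {i. i < n \<and> b i \<and> (bit c i \<noteq> a' i)}"
      using bk0 by auto
    have e3: "sgs {i. i < n \<and> b i \<and> (bit c i \<noteq> a' i)} = s1 * s2"
    proof -
      have "{i. i < n \<and> b i \<and> (bit c i \<noteq> a' i)} =
        ({i. i < n \<and> b i \<and> bit c i} - {i. i < n \<and> b i \<and> a' i}) \<union> ({i. i < n \<and> b i \<and> a' i} - {i. i < n \<and> b i \<and> bit c i})"
        by auto
      thus ?thesis unfolding s1_def s2_def by (simp add: sgs_symd)
    qed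
    have "?A $$ (r, k0) = (if (\<forall>i<n. bit r i = (bit k0 i \<noteq> a i)) then sgs {i. i < n \<and> b i \<and> bit k0 i} else 0)"
      by (rule pauli_index[OF r k0])
    thus ?thesis by (simp only: e1 e2 e3)
  qed
  have L: "(?A * ?B) $$ (r, c) = (if P then s1 * s2 else 0) * s3"
    unfolding S0 S1 S2 S3 S4 by simp
  have e4: "sgs {i. i < n \<and> (b i \<noteq> b' i) \<and> bit c i} = s1 * s3"
  proof -
    have "{i. i < n \<and> (b i \<noteq> b' i) \<and> bit c i} =
      ({i. i < n \<and> b i \<and> bit c i} - {i. i < n \<and> b' i \<and> bit c i}) \<union> ({i. i < n \<and> b' i \<and> bit c i} - {i. i < n \<and> b i \<and> bit c i})"
      by auto
    thus ?thesis unfolding s1_def s3_def by (simp add: sgs_symd)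
  qed
  have "pauli_XZ n (\<lambda>i. a i \<noteq> a' i) (\<lambda>i. b i \<noteq> b' i) $$ (r, c) =
     (if P then sgs {i. i < n \<and> (b i \<noteq> b' i) \<and> bit c i} else 0)"
    unfolding P_def by (rule pauli_index[OF r c])
  hence R: "(sgs {i. i < n \<and> b i \<and> a' i} \<cdot>\<^sub>m pauli_XZ n (\<lambda>i. a i \<noteq> a' i) (\<lambda>i. b i \<noteq> b' i)) $$ (r, c)
     = s2 * (if P then s1 * s3 else 0)"
    using r c unfolding s2_def e4 by simp
  show "(?A * ?B) $$ (r, c) = (sgs {i. i < n \<and> b i \<and> a' i} \<cdot>\<^sub>m pauli_XZ n (\<lambda>i. a i \<noteq> a' i) (\<lambda>i. b i \<noteq> b' i)) $$ (r, c)"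
    unfolding L R by (cases P) (simp_all add: ac_simps)
qed auto


lemma smult_pauli_mult:
  "(l \<cdot>\<^sub>m pauli_XZ n a b) * (l' \<cdot>\<^sub>m pauli_XZ n a' b') =
     (l * l' * sgs {i. i < n \<and> b i \<and> a' i}) \<cdot>\<^sub>m pauli_XZ n (\<lambda>i. a i \<noteq> a' i) (\<lambda>i. b i \<noteq> b' i)"
proof -
  have "(l \<cdot>\<^sub>m pauli_XZ n a b) * (l' \<cdot>\<^sub>m pauli_XZ n a' b') = l \<cdot>\<^sub>m (pauli_XZ n a b * (l' \<cdot>\<^sub>m pauli_XZ n a' b'))"
    by (rule mult_smult_assoc_mat[of _ "2^n" "2^n"]) auto
  also have "pauli_XZ n a b * (l' \<cdot>\<^sub>m pauli_XZ n a' b') = l' \<cdot>\<^sub>m (pauli_XZ n a b * pauli_XZ n a' b')"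
    by (rule mult_smult_distrib[of _ "2^n" "2^n"]) auto
  finally show ?thesis by (simp add: pauli_mult smult_smult_mat ac_simps)
qed

definition tr :: "complex mat \<Rightarrow> complex" where
  "tr A = (\<Sum>i<dim_row A. A $$ (i, i))"

lemma tr_smult: "A \<in> carrier_mat N N \<Longrightarrow> tr (l \<cdot>\<^sub>m A) = l * tr A"
  unfolding tr_def by (auto simp: sum_distrib_left intro!: sum.cong)

lemma pauli_id:
  assumes "\<forall>i<n. \<not> a i \<and> \<not> b i"
  shows "pauli_XZ n a b = 1\<^sub>m (2^n)"
proof (rule eq_matI)
  fix r c assume "r < dim_row (1\<^sub>m (2^n) :: complex mat)" "c < dim_col (1\<^sub>m (2^n) :: complex mat)"
  hence r: "r < 2^n" and c: "c < 2^n" by auto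
  have e: "(\<forall>i<n. bit r i = (bit c i \<noteq> a i)) = (r = c)"
    using assms bits_eq_nat[OF r c] by auto
  have e2: "{i. i < n \<and> b i \<and> bit c i} = {}" using assms by auto
  show "pauli_XZ n a b $$ (r, c) = 1\<^sub>m (2^n) $$ (r, c)"
    unfolding pauli_index[OF r c] e e2 using r c by (simp add: sgs_def)
qed auto

lemma pauli_trace:
  assumes "\<exists>i<n. a i \<or> b i"
  shows "tr (pauli_XZ n a b) = 0"
proof (cases "\<exists>i<n. a i")
  case True
  then obtain i0 where i0: "i0 < n" "a i0" by auto
  have z: "pauli_XZ n a b $$ (c, c) = 0" if "c < 2^n" for c
  proof -
    have "\<not> (\<forall>i<n. bit c i = (bit c i \<noteq> a i))" using i0 by auto
    thus ?thesis unfolding pauli_index[OF that that] by (rule if_not_P)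
  qed
  thus ?thesis unfolding tr_def by simp
next
  case False
  then obtain i0 where i0: "i0 < n" "b i0" using assms by auto
  define f where "f c = pauli_XZ n a b $$ (c, c)" for c
  have fv: "f c = sgs {i. i < n \<and> b i \<and> bit c i}" if "c < 2^n" for c
  proof -
    have "(\<forall>i<n. bit c i = (bit c i \<noteq> a i))" using False by auto
    thus ?thesis unfolding f_def pauli_index[OF that that] by (rule if_P)
  qed
  define g where "g c = flip_bit i0 c" for c :: nat
  have bg: "bit (g c) i = ((i0 = i) \<noteq> bit c i)" for c i unfolding g_def by (auto simp: bit_flip_bit_iff)
  have gg: "g (g c) = c" for c by (rule bit_eqI) (auto simp: bg)
  have glt: "g c < 2^n" if "c < 2^n" for c
    using that i0 bg unfolding lt_pow_bits by auto
  have fg: "f (g c) = - f c" if c: "c < 2^n" for c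
  proof -
    have "{i. i < n \<and> b i \<and> bit (g c) i} = sym_diff {i. i < n \<and> b i \<and> bit c i} {i0}"
      using i0 by (auto simp: bg)
    hence "sgs {i. i < n \<and> b i \<and> bit (g c) i} = sgs {i. i < n \<and> b i \<and> bit c i} * sgs {i0}"
      by (simp add: sgs_symd)
    moreover have "sgs {i0} = -1" by (simp add: sgs_def)
    ultimately show ?thesis using fv[OF c] fv[OF glt[OF c]] by simp
  qed
  have "(\<Sum>c<2^n. f c) = (\<Sum>c<2^n. f (g c))"
    by (rule sum.reindex_bij_witness[of _ g g]) (auto simp: gg glt)
  also have "\<dots> = (\<Sum>c<2^n. - f c)"
    by (rule sum.cong) (auto simp: fg)
  also have "\<dots> = - (\<Sum>c<2^n. f c)" by (simp add: sum_negf)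
  finally have "(\<Sum>c<2^n. f c) = 0" by simp
  thus ?thesis unfolding tr_def f_def by simp
qed

definition pp :: "nat \<Rightarrow> complex mat \<Rightarrow> bool" where
  "pp n X \<longleftrightarrow> (\<exists>l a b. X = l \<cdot>\<^sub>m pauli_XZ n a b)"

lemma pp_carrier: "pp n X \<Longrightarrow> X \<in> carrier_mat (2^n) (2^n)"
  unfolding pp_def by auto

lemma pp_mult: "pp n X \<Longrightarrow> pp n Y \<Longrightarrow> pp n (X * Y)"
  unfolding pp_def by (clarsimp simp: smult_pauli_mult) blast

lemma pp_trace: "pp n X \<Longrightarrow> tr X = 0 \<or> (\<exists>l. X = l \<cdot>\<^sub>m 1\<^sub>m (2^n))"
proof -
  assume "pp n X"
  then obtain l a b where X: "X = l \<cdot>\<^sub>m pauli_XZ n a b" unfolding pp_def by auto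
  show ?thesis
  proof (cases "\<exists>i<n. a i \<or> b i")
    case True thus ?thesis using pauli_trace[OF True] X by (simp add: tr_smult[of _ "2^n"])
  next
    case False
    hence "pauli_XZ n a b = 1\<^sub>m (2^n)" by (intro pauli_id) auto
    thus ?thesis using X by auto
  qed
qed


lemma herm_pp: "herm_pauli n P \<Longrightarrow> pp n P"
  unfolding herm_pauli_def pp_def by blast

lemma herm_carrier: "herm_pauli n P \<Longrightarrow> P \<in> carrier_mat (2^n) (2^n)"
  using herm_pp pp_carrier by blast

lemma i_pow_sq: "(\<i> ^ k) * (\<i> ^ k) = (-1 :: complex) ^ k"
proof -
  have "(\<i> ^ k) * (\<i> ^ k) = (\<i> * \<i>) ^ k" by (rule power_mult_distrib[symmetric])
  also have "\<i> * \<i> = (-1::complex)" by (rule i_squared)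
  finally show ?thesis .
qed

lemma card_and_comm: "card {i. i < n \<and> b i \<and> a i} = card {i. i < n \<and> a i \<and> b i}"
  by (rule arg_cong[where f = card]) auto

lemma herm_sq: "herm_pauli n P \<Longrightarrow> P * P = 1\<^sub>m (2^n)"
proof -
  assume "herm_pauli n P"
  then obtain s a b where s: "s = 1 \<or> s = -1"
    and P: "P = (s * \<i> ^ card {i. i < n \<and> a i \<and> b i}) \<cdot>\<^sub>m pauli_XZ n a b"
    unfolding herm_pauli_def by blast
  define k where "k = card {i. i < n \<and> a i \<and> b i}"
  have id: "pauli_XZ n (\<lambda>i. a i \<noteq> a i) (\<lambda>i. b i \<noteq> b i) = 1\<^sub>m (2^n)"
    by (rule pauli_id) auto
  have c: "(s * \<i> ^ k) * (s * \<i> ^ k) * sgs {i. i < n \<and> b i \<and> a i} = 1"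
  proof -
    have "sgs {i. i < n \<and> b i \<and> a i} = (-1) ^ k" unfolding sgs_pow k_def using card_and_comm[of n b a] by simp
    moreover have "s * s = 1" using s by auto
    moreover have "(s * \<i> ^ k) * (s * \<i> ^ k) = (s * s) * ((\<i> ^ k) * (\<i> ^ k))" by (simp add: ac_simps)
    ultimately show ?thesis by (simp add: i_pow_sq flip: power_mult_distrib)
  qed
  show ?thesis unfolding P smult_pauli_mult id k_def[symmetric] c by (rule eq_matI) auto
qed

lemma pp_sq_herm:
  assumes "pp n X" "X * X = 1\<^sub>m (2^n)"
  shows "herm_pauli n X"
proof -
  obtain l a b where X: "X = l \<cdot>\<^sub>m pauli_XZ n a b" using assms(1) unfolding pp_def by auto
  define k where "k = card {i. i < n \<and> a i \<and> b i}"
  have id: "pauli_XZ n (\<lambda>i. a i \<noteq> a i) (\<lambda>i. b i \<noteq> b i) = 1\<^sub>m (2^n)"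
    by (rule pauli_id) auto
  have "(l * l * sgs {i. i < n \<and> b i \<and> a i}) \<cdot>\<^sub>m 1\<^sub>m (2^n) = (1\<^sub>m (2^n) :: complex mat)"
    using assms(2) unfolding X smult_pauli_mult id .
  hence "((l * l * sgs {i. i < n \<and> b i \<and> a i}) \<cdot>\<^sub>m 1\<^sub>m (2^n)) $$ (0, 0) = (1\<^sub>m (2^n) :: complex mat) $$ (0, 0)"
    by simp
  hence e: "l * l * sgs {i. i < n \<and> b i \<and> a i} = 1" by simp
  have sg: "sgs {i. i < n \<and> b i \<and> a i} = (-1) ^ k" unfolding sgs_pow k_def using card_and_comm[of n b a] by simp
  have "l * l = (-1) ^ k"
  proof -
    have "l * l = l * l * ((-1) ^ k * (-1) ^ k)" by (simp flip: power_mult_distrib)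
    also have "\<dots> = (l * l * (-1) ^ k) * (-1) ^ k" by (simp add: ac_simps)
    also have "\<dots> = (-1) ^ k" using e sg by simp
    finally show ?thesis .
  qed
  hence "l * l = (\<i> ^ k) * (\<i> ^ k)" by (simp add: i_pow_sq)
  hence "(l - \<i> ^ k) * (l + \<i> ^ k) = 0" by (simp add: algebra_simps)
  hence "l = \<i> ^ k \<or> l = - (\<i> ^ k)" by (auto simp: add_eq_0_iff2)
  hence "\<exists>s. (s = 1 \<or> s = -1) \<and> l = s * \<i> ^ k" by auto
  thus ?thesis unfolding herm_pauli_def X k_def by blast
qed

lemma uminus_smult_mat: "- (x \<cdot>\<^sub>m (A :: complex mat)) = (- x) \<cdot>\<^sub>m A"
  by (rule eq_matI) auto

lemma herm_comm:
  assumes "herm_pauli n P" "herm_pauli n Q"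
  shows "P * Q = Q * P \<or> P * Q = - (Q * P)"
proof -
  obtain s a b where P: "P = (s * \<i> ^ card {i. i < n \<and> a i \<and> b i}) \<cdot>\<^sub>m pauli_XZ n a b"
    using assms(1) unfolding herm_pauli_def by blast
  obtain s' a' b' where Q: "Q = (s' * \<i> ^ card {i. i < n \<and> a' i \<and> b' i}) \<cdot>\<^sub>m pauli_XZ n a' b'"
    using assms(2) unfolding herm_pauli_def by blast
  have e1: "(\<lambda>i. a' i \<noteq> a i) = (\<lambda>i. a i \<noteq> a' i)" by auto
  have e2: "(\<lambda>i. b' i \<noteq> b i) = (\<lambda>i. b i \<noteq> b' i)" by auto
  show ?thesis
    unfolding P Q smult_pauli_mult e1 e2 uminus_smult_mat
    using sgs_cases[of "{i. i < n \<and> b i \<and> a' i}"] sgs_cases[of "{i. i < n \<and> b' i \<and> a i}"]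
    by (auto simp: ac_simps)
qed

lemma adj_dim[simp]: "dim_row (mat_adjoint A) = dim_col A" "dim_col (mat_adjoint A) = dim_row A"
  unfolding mat_adjoint_def by auto

lemma adj_index: "i < dim_col A \<Longrightarrow> j < dim_row A \<Longrightarrow> mat_adjoint A $$ (i, j) = cnj (A $$ (j, i))"
  unfolding mat_adjoint_def by (simp add: mat_of_rows_index)

lemma herm_adj: "herm_pauli n P \<Longrightarrow> mat_adjoint P = P"
proof -
  assume "herm_pauli n P"
  then obtain s a b where s: "s = 1 \<or> s = -1"
    and P: "P = (s * \<i> ^ card {i. i < n \<and> a i \<and> b i}) \<cdot>\<^sub>m pauli_XZ n a b"
    unfolding herm_pauli_def by blast
  define k where "k = card {i. i < n \<and> a i \<and> b i}"
  define c0 where "c0 = s * \<i> ^ k"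
  have P': "P = c0 \<cdot>\<^sub>m pauli_XZ n a b" unfolding P c0_def k_def ..
  have cc0: "cnj c0 = c0 * (-1) ^ k"
  proof -
    have "cnj s = s" using s by auto
    moreover have "cnj (\<i> ^ k) = (-1) ^ k * \<i> ^ k"
    proof -
      have "cnj (\<i> ^ k) = (- \<i>) ^ k" by (simp only: complex_cnj_power complex_cnj_i)
      also have "\<dots> = ((-1) * \<i>) ^ k" by simp
      also have "\<dots> = (-1) ^ k * \<i> ^ k" by (rule power_mult_distrib)
      finally show ?thesis .
    qed
    ultimately show ?thesis unfolding c0_def by (simp add: ac_simps)
  qed
  have m1: "((-1::complex) ^ k) * (-1) ^ k = 1" by (simp flip: power_mult_distrib)
  show ?thesis
  proof (rule eq_matI)
    fix r c assume "r < dim_row P" "c < dim_col P"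
    hence r: "r < 2^n" and c: "c < 2^n" unfolding P by auto
    define C where "C = (\<forall>i<n. bit r i = (bit c i \<noteq> a i))"
    have cond: "(\<forall>i<n. bit c i = (bit r i \<noteq> a i)) = C" unfolding C_def by auto
    have e1: "mat_adjoint P $$ (r, c) = cnj (P $$ (c, r))"
      using r c by (simp add: adj_index P')
    have e2: "P $$ (c, r) = c0 * (if C then sgs {i. i < n \<and> b i \<and> bit r i} else 0)"
    proof -
      have "pauli_XZ n a b $$ (c, r) = (if C then sgs {i. i < n \<and> b i \<and> bit r i} else 0)"
        unfolding pauli_index[OF c r] cond ..
      thus ?thesis using r c unfolding P' by simp
    qed
    have e3: "P $$ (r, c) = c0 * (if C then sgs {i. i < n \<and> b i \<and> bit c i} else 0)"
    proof -
      have "pauli_XZ n a b $$ (r, c) = (if C then sgs {i. i < n \<and> b i \<and> bit c i} else 0)"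
        unfolding pauli_index[OF r c] C_def ..
      thus ?thesis using r c unfolding P' by simp
    qed
    have cs: "cnj (sgs A) = sgs A" for A unfolding sgs_def by simp
    have "cnj (c0 * sgs {i. i < n \<and> b i \<and> bit r i}) = c0 * sgs {i. i < n \<and> b i \<and> bit c i}"
      if h: C
    proof -
      have "{i. i < n \<and> b i \<and> bit r i} = sym_diff {i. i < n \<and> b i \<and> bit c i} {i. i < n \<and> b i \<and> a i}"
        using h unfolding C_def by auto
      hence "sgs {i. i < n \<and> b i \<and> bit r i} = sgs {i. i < n \<and> b i \<and> bit c i} * sgs {i. i < n \<and> b i \<and> a i}"
        by (simp add: sgs_symd)
      also have "sgs {i. i < n \<and> b i \<and> a i} = (-1) ^ k"
        unfolding sgs_pow k_def using card_and_comm[of n b a] by simp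
      finally have "sgs {i. i < n \<and> b i \<and> bit r i} = sgs {i. i < n \<and> b i \<and> bit c i} * (-1) ^ k" .
      hence "cnj (c0 * sgs {i. i < n \<and> b i \<and> bit r i}) = c0 * (-1) ^ k * (sgs {i. i < n \<and> b i \<and> bit c i} * (-1) ^ k)"
        by (simp only: complex_cnj_mult cc0 cs complex_cnj_power complex_cnj_minus complex_cnj_one)
      also have "\<dots> = c0 * sgs {i. i < n \<and> b i \<and> bit c i} * ((-1) ^ k * (-1) ^ k)" by (simp only: ac_simps)
      finally show ?thesis using m1 by simp
    qed
    thus "mat_adjoint P $$ (r, c) = P $$ (r, c)"
      unfolding e1 e2 e3 by (cases C) auto
  qed (auto simp: P)
qed


abbreviation CM :: "nat \<Rightarrow> complex mat set" where "CM n \<equiv> carrier_mat (2^n) (2^n)"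

lemma smult_one_mat[simp]: "(1::complex) \<cdot>\<^sub>m A = A"
  by (rule eq_matI) auto

lemma smult_mone_mat: "(-1::complex) \<cdot>\<^sub>m A = - A"
  by (rule eq_matI) auto

lemma tr_add: "A \<in> carrier_mat N N \<Longrightarrow> B \<in> carrier_mat N N \<Longrightarrow> tr (A + B) = tr A + tr B"
  unfolding tr_def by (auto simp: sum.distrib intro!: sum.cong)

lemma tr_one: "tr (1\<^sub>m N) = of_nat N"
  unfolding tr_def by simp

lemma tr_mult_sum:
  assumes "A \<in> carrier_mat N N" "B \<in> carrier_mat N N"
  shows "tr (A * B) = (\<Sum>i<N. \<Sum>k<N. A $$ (i, k) * B $$ (k, i))"
  using assms unfolding tr_def by (auto simp: scalar_prod_def atLeast0LessThan intro!: sum.cong)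

lemma tr_cyc:
  assumes "A \<in> carrier_mat N N" "B \<in> carrier_mat N N"
  shows "tr (A * B) = tr (B * A)"
proof -
  have "tr (A * B) = (\<Sum>i<N. \<Sum>k<N. A $$ (i, k) * B $$ (k, i))" by (rule tr_mult_sum[OF assms])
  also have "\<dots> = (\<Sum>k<N. \<Sum>i<N. B $$ (k, i) * A $$ (i, k))"
    by (subst sum.swap) (simp add: ac_simps)
  also have "\<dots> = tr (B * A)" by (rule tr_mult_sum[OF assms(2,1), symmetric])
  finally show ?thesis .
qed

lemma adj_carrier[simp]: "A \<in> carrier_mat N M \<Longrightarrow> mat_adjoint A \<in> carrier_mat M N"
  unfolding carrier_mat_def by auto

lemma adj_mult:
  fixes A B :: "complex mat"
  assumes "A \<in> carrier_mat N N" "B \<in> carrier_mat N N"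
  shows "mat_adjoint (A * B) = mat_adjoint B * mat_adjoint A"
proof (rule eq_matI)
  fix i j assume "i < dim_row (mat_adjoint B * mat_adjoint A)" "j < dim_col (mat_adjoint B * mat_adjoint A)"
  hence i: "i < N" and j: "j < N" using assms by auto
  have "mat_adjoint (A * B) $$ (i, j) = cnj (\<Sum>k\<in>{0..<N}. A $$ (j, k) * B $$ (k, i))"
    using assms i j by (simp add: adj_index scalar_prod_def)
  also have "\<dots> = (\<Sum>k\<in>{0..<N}. cnj (B $$ (k, i)) * cnj (A $$ (j, k)))"
    by (simp add: ac_simps)
  also have "\<dots> = (mat_adjoint B * mat_adjoint A) $$ (i, j)"
    using assms i j by (simp add: adj_index scalar_prod_def)
  finally show "mat_adjoint (A * B) $$ (i, j) = (mat_adjoint B * mat_adjoint A) $$ (i, j)" .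
qed (use assms in auto)

lemma adj_one: "mat_adjoint (1\<^sub>m N :: complex mat) = 1\<^sub>m N"
  by (rule eq_matI) (auto simp: adj_index)

lemma cmD: "A \<in> carrier_mat r c \<Longrightarrow> dim_row A = r \<and> dim_col A = c"
  by auto

lemma assoc_dim:
  assumes "dim_col A = dim_row B" "dim_col B = dim_row C"
  shows "(A * B) * C = A * (B * (C :: complex mat))"
proof -
  have a: "A \<in> carrier_mat (dim_row A) (dim_col A)" by (rule carrier_matI) auto
  have b: "B \<in> carrier_mat (dim_col A) (dim_col B)" using assms by (intro carrier_matI) auto
  have c: "C \<in> carrier_mat (dim_col B) (dim_col C)" using assms by (intro carrier_matI) auto
  show ?thesis by (rule assoc_mult_mat[OF a b c])
qed

lemma add_mult_dim:
  assumes "dim_row A = dim_row B" "dim_col A = dim_col B" "dim_col A = dim_row C"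
  shows "(A + B) * C = A * C + B * (C :: complex mat)"
proof -
  have a: "A \<in> carrier_mat (dim_row A) (dim_col A)" by (rule carrier_matI) auto
  have b: "B \<in> carrier_mat (dim_row A) (dim_col A)" using assms by (intro carrier_matI) auto
  have c: "C \<in> carrier_mat (dim_col A) (dim_col C)" using assms by (intro carrier_matI) auto
  show ?thesis by (rule add_mult_distrib_mat[OF a b c])
qed

lemma mult_add_dim:
  assumes "dim_col A = dim_row B" "dim_row B = dim_row C" "dim_col B = dim_col C"
  shows "A * (B + C) = A * B + A * (C :: complex mat)"
proof -
  have a: "A \<in> carrier_mat (dim_row A) (dim_col A)" by (rule carrier_matI) auto
  have b: "B \<in> carrier_mat (dim_col A) (dim_col B)" using assms by (intro carrier_matI) auto
  have c: "C \<in> carrier_mat (dim_col A) (dim_col B)" using assms by (intro carrier_matI) auto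
  show ?thesis by (rule mult_add_distrib_mat[OF a b c])
qed

lemma mult_smult_dim:
  assumes "dim_col A = dim_row B"
  shows "A * (k \<cdot>\<^sub>m B) = k \<cdot>\<^sub>m (A * (B :: complex mat))"
proof -
  have a: "A \<in> carrier_mat (dim_row A) (dim_col A)" by (rule carrier_matI) auto
  have b: "B \<in> carrier_mat (dim_col A) (dim_col B)" using assms by (intro carrier_matI) auto
  show ?thesis by (rule mult_smult_distrib[OF a b])
qed

lemma smult_mult_dim:
  assumes "dim_col A = dim_row B"
  shows "(k \<cdot>\<^sub>m A) * B = k \<cdot>\<^sub>m (A * (B :: complex mat))"
proof -
  have a: "A \<in> carrier_mat (dim_row A) (dim_col A)" by (rule carrier_matI) auto
  have b: "B \<in> carrier_mat (dim_col A) (dim_col B)" using assms by (intro carrier_matI) auto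
  show ?thesis by (rule mult_smult_assoc_mat[OF a b])
qed

lemma smult_add_dim:
  assumes "dim_row A = dim_row B" "dim_col A = dim_col B"
  shows "k \<cdot>\<^sub>m (A + B) = k \<cdot>\<^sub>m A + k \<cdot>\<^sub>m (B :: complex mat)"
proof -
  have a: "A \<in> carrier_mat (dim_row A) (dim_col A)" by (rule carrier_matI) auto
  have b: "B \<in> carrier_mat (dim_row A) (dim_col A)" using assms by (intro carrier_matI) auto
  show ?thesis by (rule add_smult_distrib_left_mat[OF a b])
qed

lemmas malg = assoc_dim add_mult_dim mult_add_dim mult_smult_dim smult_mult_dim smult_smult_mat

lemma prod_mats_Nil[simp]: "prod_mats n [] = 1\<^sub>m (2^n)"
  unfolding prod_mats_def by simp

lemma prod_mats_Cons[simp]: "prod_mats n (A # L) = A * prod_mats n L"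
  unfolding prod_mats_def by simp

lemma prod_mats_carrier: "(\<forall>A\<in>set L. A \<in> CM n) \<Longrightarrow> prod_mats n L \<in> CM n"
  by (induction L) auto

lemma prod_mats_append:
  "(\<forall>A\<in>set L1. A \<in> CM n) \<Longrightarrow> (\<forall>A\<in>set L2. A \<in> CM n) \<Longrightarrow>
    prod_mats n (L1 @ L2) = prod_mats n L1 * prod_mats n L2"
proof (induction L1)
  case Nil thus ?case using prod_mats_carrier[of L2 n] by simp
next
  case (Cons A L1)
  hence A: "A \<in> CM n" by simp
  have "prod_mats n L1 \<in> CM n" "prod_mats n L2 \<in> CM n" using Cons.prems prod_mats_carrier by auto
  thus ?case using Cons A by simp
qed

lemma prod_mats_comm:
  assumes "X \<in> CM n" "\<forall>A\<in>set L. A \<in> CM n \<and> X * A = A * X"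
  shows "X * prod_mats n L = prod_mats n L * X"
  using assms(2)
proof (induction L)
  case Nil thus ?case using assms(1) by simp
next
  case (Cons A L)
  have A: "A \<in> CM n" and XA: "X * A = A * X" using Cons.prems by auto
  have L: "prod_mats n L \<in> CM n" using Cons.prems prod_mats_carrier[of L n] by auto
  have "X * prod_mats n (A # L) = (X * A) * prod_mats n L" using A L assms(1) by simp
  also have "\<dots> = A * (X * prod_mats n L)" using A L assms(1) XA by simp
  also have "\<dots> = A * (prod_mats n L * X)" using Cons by simp
  also have "\<dots> = prod_mats n (A # L) * X" using A L assms(1) by simp
  finally show ?case .
qed


definition ci :: "nat \<Rightarrow> complex mat list \<Rightarrow> bool" where
  "ci n L \<longleftrightarrow> (\<forall>A\<in>set L. herm_pauli n A) \<and> (\<forall>A\<in>set L. \<forall>B\<in>set L. A * B = B * A)"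

lemma ci_Cons: "ci n (x # L) \<Longrightarrow> ci n L"
  unfolding ci_def by auto

lemma ci_carrier: "ci n L \<Longrightarrow> A \<in> set L \<Longrightarrow> A \<in> CM n"
  unfolding ci_def using herm_carrier by blast

lemma prod_nths_Cons:
  "prod_mats n (nths (x # l) I) =
     (if 0 \<in> I then x * prod_mats n (nths l {j. Suc j \<in> I}) else prod_mats n (nths l {j. Suc j \<in> I}))"
  by (simp add: nths_Cons)

lemma prod_nths_carrier: "ci n L \<Longrightarrow> prod_mats n (nths L I) \<in> CM n"
  using ci_carrier[of n L] set_nths_subset[of L I] by (intro prod_mats_carrier) auto

lemma prod_nths_comm:
  assumes "ci n L" "A \<in> set L"
  shows "A * prod_mats n (nths L I) = prod_mats n (nths L I) * A"
proof (rule prod_mats_comm)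
  show "A \<in> CM n" using assms ci_carrier by blast
  show "\<forall>B\<in>set (nths L I). B \<in> CM n \<and> A * B = B * A"
    using assms set_nths_subset[of L I] ci_carrier[of n L] unfolding ci_def by blast
qed

lemma comm_rot:
  assumes "A \<in> CM n" "B \<in> CM n" "C \<in> CM n" "A * B = B * A"
  shows "B * (A * C) = A * (B * C)"
proof -
  have "B * (A * C) = (B * A) * C" using cmD[OF assms(1)] cmD[OF assms(2)] cmD[OF assms(3)] by (simp add: malg)
  also have "\<dots> = (A * B) * C" using assms(4) by simp
  also have "\<dots> = A * (B * C)" using cmD[OF assms(1)] cmD[OF assms(2)] cmD[OF assms(3)] by (simp add: malg)
  finally show ?thesis .
qed

lemma ci_Cons_comm:
  assumes "ci n (x # l)"
  shows "x * prod_mats n (nths l K) = prod_mats n (nths l K) * x"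
proof (rule prod_mats_comm)
  show "x \<in> CM n" using assms ci_carrier by (meson list.set_intros(1))
  show "\<forall>B\<in>set (nths l K). B \<in> CM n \<and> x * B = B * x"
    using assms set_nths_subset[of l K] ci_carrier[OF ci_Cons[OF assms]] unfolding ci_def by auto
qed

lemma nths_mult:
  assumes "ci n L"
  shows "prod_mats n (nths L I) * prod_mats n (nths L J) = prod_mats n (nths L (sym_diff I J))"
  using assms
proof (induction L arbitrary: I J)
  case Nil thus ?case by simp
next
  case (Cons x l)
  have cl: "ci n l" using Cons.prems ci_Cons by blast
  have x: "x \<in> CM n" and xx: "x * x = 1\<^sub>m (2^n)"
    using Cons.prems herm_sq unfolding ci_def by (auto intro: herm_carrier)
  define I' where "I' = {j. Suc j \<in> I}"
  define J' where "J' = {j. Suc j \<in> J}"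
  have D: "{j. Suc j \<in> sym_diff I J} = sym_diff I' J'" unfolding I'_def J'_def by auto
  have IH: "prod_mats n (nths l I') * prod_mats n (nths l J') = prod_mats n (nths l (sym_diff I' J'))"
    using Cons.IH[OF cl] .
  have p1: "prod_mats n (nths l I') \<in> CM n" and p2: "prod_mats n (nths l J') \<in> CM n"
    using prod_nths_carrier[OF cl] by auto
  have xc: "x * prod_mats n (nths l K) = prod_mats n (nths l K) * x" for K
    by (rule ci_Cons_comm[OF Cons.prems])
  show ?case
  proof (cases "0 \<in> I"; cases "0 \<in> J")
    assume a: "0 \<in> I" "0 \<in> J"
    have "x * prod_mats n (nths l I') * (x * prod_mats n (nths l J')) =
        (x * (prod_mats n (nths l I') * x)) * prod_mats n (nths l J')"
      using cmD[OF x] cmD[OF p1] cmD[OF p2] by (simp add: malg)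
    also have "\<dots> = (x * x) * (prod_mats n (nths l I') * prod_mats n (nths l J'))"
      using cmD[OF x] cmD[OF p1] cmD[OF p2] xc[of I'] by (simp add: malg comm_rot[OF x p1 p2])
    finally show ?thesis using a cmD[OF x] cmD[OF prod_nths_carrier[OF cl]] xx unfolding prod_nths_Cons D I'_def[symmetric] J'_def[symmetric] IH
      by (simp add: malg)
  next
    assume a: "0 \<in> I" "0 \<notin> J"
    show ?thesis using a cmD[OF x] cmD[OF p1] cmD[OF p2] unfolding prod_nths_Cons D I'_def[symmetric] J'_def[symmetric]
      by (simp add: IH malg)
  next
    assume a: "0 \<notin> I" "0 \<in> J"
    have "prod_mats n (nths l I') * (x * prod_mats n (nths l J')) =
        x * (prod_mats n (nths l I') * prod_mats n (nths l J'))"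
      using cmD[OF x] cmD[OF p1] cmD[OF p2] xc[of I'] by (simp add: malg flip: assoc_dim)
    thus ?thesis using a unfolding prod_nths_Cons D I'_def[symmetric] J'_def[symmetric] IH
      by simp
  next
    assume a: "0 \<notin> I" "0 \<notin> J"
    show ?thesis using a unfolding prod_nths_Cons D I'_def[symmetric] J'_def[symmetric]
      by (simp add: IH)
  qed
qed

lemma nths_sq:
  assumes "ci n L"
  shows "prod_mats n (nths L I) * prod_mats n (nths L I) = 1\<^sub>m (2^n)"
  using nths_mult[OF assms, of I I] by simp

lemma nths_adj:
  assumes "ci n L"
  shows "mat_adjoint (prod_mats n (nths L I)) = prod_mats n (nths L I)"
  using assms
proof (induction L arbitrary: I)
  case Nil thus ?case by (simp add: adj_one)
next
  case (Cons x l)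
  have cl: "ci n l" using Cons.prems ci_Cons by blast
  have x: "x \<in> CM n" and xa: "mat_adjoint x = x"
    using Cons.prems herm_adj unfolding ci_def by (auto intro: herm_carrier)
  define I' where "I' = {j. Suc j \<in> I}"
  have p: "prod_mats n (nths l I') \<in> CM n" using prod_nths_carrier[OF cl] by auto
  have xc: "x * prod_mats n (nths l I') = prod_mats n (nths l I') * x"
    by (rule ci_Cons_comm[OF Cons.prems])
  show ?case
  proof (cases "0 \<in> I")
    case True
    have "mat_adjoint (x * prod_mats n (nths l I')) = mat_adjoint (prod_mats n (nths l I')) * mat_adjoint x"
      using x p by (rule adj_mult)
    thus ?thesis using True xa xc Cons.IH[OF cl, of I'] unfolding prod_nths_Cons I'_def[symmetric] by simp
  next
    case False
    thus ?thesis using Cons.IH[OF cl, of I'] unfolding prod_nths_Cons I'_def[symmetric] by simp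
  qed
qed

lemma nths_single: "i < length L \<Longrightarrow> nths L {i} = [L ! i]"
proof (induction L arbitrary: i)
  case Nil thus ?case by simp
next
  case (Cons x l)
  show ?case
  proof (cases i)
    case 0
    have "{j. Suc j \<in> {i}} = {}" using 0 by auto
    thus ?thesis using 0 by (simp add: nths_Cons)
  next
    case (Suc i')
    have "{j. Suc j \<in> {i}} = {i'}" using Suc by auto
    thus ?thesis using Suc Cons by (simp add: nths_Cons)
  qed
qed

lemma group_rep:
  assumes "g \<in> gen_group n L" "ci n L"
  shows "\<exists>I. I \<subseteq> {..<length L} \<and> g = prod_mats n (nths L I)"
  using assms
proof (induction rule: gen_group.induct)
  case one
  show ?case by (rule exI[of _ "{}"]) simp
next
  case (gen T)
  then obtain i where i: "i < length L" "L ! i = T" by (auto simp: in_set_conv_nth)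
  have "T \<in> CM n" using gen ci_carrier by blast
  hence "T = prod_mats n (nths L {i})" using i by (simp add: nths_single)
  thus ?case using i by (intro exI[of _ "{i}"]) auto
next
  case (mult A B)
  then obtain I J where "I \<subseteq> {..<length L}" "A = prod_mats n (nths L I)"
    "J \<subseteq> {..<length L}" "B = prod_mats n (nths L J)" by blast
  thus ?case using nths_mult[OF mult.prems, of I J] by (intro exI[of _ "sym_diff I J"]) auto
next
  case (inv A)
  then obtain I where "I \<subseteq> {..<length L}" "A = prod_mats n (nths L I)" by blast
  thus ?case using nths_adj[OF inv.prems, of I] by auto
qed

lemma gen_group_mono: "g \<in> gen_group n L \<Longrightarrow> g \<in> gen_group n (T # L)"
  by (induction rule: gen_group.induct) (auto intro: gen_group.intros)

lemma gen_group_multT: "g \<in> gen_group n L \<Longrightarrow> T * g \<in> gen_group n (T # L)"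
  by (rule gen_group.mult) (auto intro: gen_group.intros gen_group_mono)

lemma group_sq:
  assumes "g \<in> gen_group n L" "ci n L"
  shows "g * g = 1\<^sub>m (2^n) \<and> g \<in> CM n"
  using group_rep[OF assms] nths_sq[OF assms(2)] prod_nths_carrier[OF assms(2)] by auto


definition sg :: "(nat \<Rightarrow> bool) \<Rightarrow> nat set \<Rightarrow> complex" where
  "sg w K = sgs {k\<in>K. w k}"

lemma sg_sq[simp]: "sg w K * sg w K = 1" unfolding sg_def by simp
lemma sg_cases: "sg w K = 1 \<or> sg w K = -1" unfolding sg_def using sgs_cases by blast
lemma sg_empty[simp]: "sg w {} = 1" unfolding sg_def sgs_def by simp

lemma sg_symd: "finite A \<Longrightarrow> finite B \<Longrightarrow> sg w (symd A B) = sg w A * sg w B"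
proof -
  assume f: "finite A" "finite B"
  have "{k \<in> symd A B. w k} = sym_diff {k\<in>A. w k} {k\<in>B. w k}" unfolding symd_def by auto
  thus ?thesis unfolding sg_def using f by (simp add: sgs_symd)
qed

lemma symd_finite: "finite A \<Longrightarrow> finite B \<Longrightarrow> finite (symd A B)" unfolding symd_def by auto

lemma symdiff_list_Nil[simp]: "symdiff_list [] = {}" unfolding symdiff_list_def by simp

lemma symdiff_list_Cons: "symdiff_list (K # Ks) = symd K (symdiff_list Ks)"
  unfolding symdiff_list_def symd_def by simp

lemma symdiff_list_finite: "\<forall>K\<in>set Ks. finite K \<Longrightarrow> finite (symdiff_list Ks)"
  by (induction Ks) (auto simp: symdiff_list_Cons symd_finite)

definition goodSL :: "nat \<Rightarrow> (complex mat \<times> nat set) list \<Rightarrow> bool" where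
  "goodSL n SL \<longleftrightarrow> ci n (map fst SL) \<and> (\<forall>p\<in>set SL. finite (snd p))"

lemma goodSL_herm: "goodSL n SL \<Longrightarrow> p \<in> set SL \<Longrightarrow> herm_pauli n (fst p)"
  unfolding goodSL_def ci_def by auto
lemma goodSL_carrier: "goodSL n SL \<Longrightarrow> p \<in> set SL \<Longrightarrow> fst p \<in> CM n"
  using goodSL_herm herm_carrier by blast
lemma goodSL_comm: "goodSL n SL \<Longrightarrow> p \<in> set SL \<Longrightarrow> q \<in> set SL \<Longrightarrow> fst p * fst q = fst q * fst p"
  unfolding goodSL_def ci_def by auto
lemma goodSL_sq: "goodSL n SL \<Longrightarrow> p \<in> set SL \<Longrightarrow> fst p * fst p = 1\<^sub>m (2^n)"
  using goodSL_herm herm_sq by blast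
lemma goodSL_fin: "goodSL n SL \<Longrightarrow> p \<in> set SL \<Longrightarrow> finite (snd p)"
  unfolding goodSL_def by auto

lemma prod_sign:
  assumes M: "M \<in> CM n"
  and h: "\<forall>p\<in>set L. fst p \<in> CM n \<and> finite (snd p) \<and> fst p * M = sg w (snd p) \<cdot>\<^sub>m M"
  shows "prod_mats n (map fst L) * M = sg w (symdiff_list (map snd L)) \<cdot>\<^sub>m M"
  using h
proof (induction L)
  case Nil thus ?case using M by simp
next
  case (Cons p L)
  obtain T K where p: "p = (T, K)" by force
  have T: "T \<in> CM n" "finite K" "T * M = sg w K \<cdot>\<^sub>m M" using Cons.prems p by auto
  have P: "prod_mats n (map fst L) \<in> CM n" using Cons.prems by (intro prod_mats_carrier) auto
  have fin: "finite (symdiff_list (map snd L))" using Cons.prems by (intro symdiff_list_finite) auto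
  have "prod_mats n (map fst (p # L)) * M = T * (prod_mats n (map fst L) * M)"
    using p cmD[OF T(1)] cmD[OF P] cmD[OF M] by (simp add: malg)
  also have "\<dots> = T * (sg w (symdiff_list (map snd L)) \<cdot>\<^sub>m M)" using Cons by simp
  also have "\<dots> = sg w (symdiff_list (map snd L)) \<cdot>\<^sub>m (T * M)" using cmD[OF T(1)] cmD[OF M] by (simp add: malg)
  also have "\<dots> = (sg w (symdiff_list (map snd L)) * sg w K) \<cdot>\<^sub>m M" using T(3) by (simp add: smult_smult_mat)
  also have "\<dots> = sg w (symdiff_list (map snd (p # L))) \<cdot>\<^sub>m M"
    using p T(2) fin by (simp add: symdiff_list_Cons sg_symd ac_simps)
  finally show ?case .
qed

definition Qf :: "nat \<Rightarrow> (nat \<Rightarrow> bool) \<Rightarrow> complex mat \<times> nat set \<Rightarrow> complex mat" where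
  "Qf n w p = 1\<^sub>m (2^n) + sg w (snd p) \<cdot>\<^sub>m fst p"

definition Qm :: "nat \<Rightarrow> (nat \<Rightarrow> bool) \<Rightarrow> (complex mat \<times> nat set) list \<Rightarrow> complex mat" where
  "Qm n w SL = prod_mats n (map (Qf n w) SL)"

lemma Qf_carrier: "fst p \<in> CM n \<Longrightarrow> Qf n w p \<in> CM n" unfolding Qf_def by auto

lemma Qm_carrier: "\<forall>p\<in>set SL. fst p \<in> CM n \<Longrightarrow> Qm n w SL \<in> CM n"
  unfolding Qm_def by (intro prod_mats_carrier) (auto intro: Qf_carrier)

lemma Qm_Nil[simp]: "Qm n w [] = 1\<^sub>m (2^n)" unfolding Qm_def by simp
lemma Qm_Cons: "Qm n w (p # L) = Qf n w p * Qm n w L" unfolding Qm_def by simp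

lemma Qm_append: "\<forall>p\<in>set L1. fst p \<in> CM n \<Longrightarrow> \<forall>p\<in>set L2. fst p \<in> CM n \<Longrightarrow>
  Qm n w (L1 @ L2) = Qm n w L1 * Qm n w L2"
  unfolding Qm_def by (simp add: prod_mats_append Qf_carrier)

lemma comm_Qf:
  assumes X: "X \<in> CM n" and T: "fst p \<in> CM n" and c: "X * fst p = fst p * X"
  shows "X * Qf n w p = Qf n w p * X"
proof -
  have "X * Qf n w p = X + sg w (snd p) \<cdot>\<^sub>m (X * fst p)"
    unfolding Qf_def using cmD[OF X] cmD[OF T] by (simp add: malg)
  also have "\<dots> = X + sg w (snd p) \<cdot>\<^sub>m (fst p * X)" using c by simp
  also have "\<dots> = Qf n w p * X"
    unfolding Qf_def using cmD[OF X] cmD[OF T] by (simp add: malg)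
  finally show ?thesis .
qed

lemma Qm_comm:
  assumes X: "X \<in> CM n" and h: "\<forall>p\<in>set SL. fst p \<in> CM n \<and> X * fst p = fst p * X"
  shows "X * Qm n w SL = Qm n w SL * X"
  unfolding Qm_def
proof (rule prod_mats_comm[OF X])
  show "\<forall>A\<in>set (map (Qf n w) SL). A \<in> CM n \<and> X * A = A * X"
    using h comm_Qf[OF X] Qf_carrier by auto
qed

lemma QfT:
  assumes T: "fst p \<in> CM n" and sq: "fst p * fst p = 1\<^sub>m (2^n)"
  shows "fst p * Qf n w p = sg w (snd p) \<cdot>\<^sub>m Qf n w p"
proof -
  have "fst p * Qf n w p = fst p + sg w (snd p) \<cdot>\<^sub>m 1\<^sub>m (2^n)"
    unfolding Qf_def using cmD[OF T] sq by (simp add: malg)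
  also have "\<dots> = sg w (snd p) \<cdot>\<^sub>m 1\<^sub>m (2^n) + fst p"
    using T by (intro comm_add_mat) auto
  also have "\<dots> = sg w (snd p) \<cdot>\<^sub>m Qf n w p"
    unfolding Qf_def using cmD[OF T] by (simp add: smult_add_dim smult_smult_mat)
  finally show ?thesis .
qed

lemma QT:
  assumes "goodSL n SL" "p \<in> set SL"
  shows "fst p * Qm n w SL = sg w (snd p) \<cdot>\<^sub>m Qm n w SL"
  using assms
proof (induction SL)
  case Nil thus ?case by simp
next
  case (Cons q L)
  have gL: "goodSL n L" using Cons.prems unfolding goodSL_def ci_def by auto
  have T: "fst p \<in> CM n" using goodSL_carrier Cons.prems by blast
  have Tq: "fst q \<in> CM n" using goodSL_carrier Cons.prems by (meson list.set_intros(1))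
  have QL: "Qm n w L \<in> CM n" using gL goodSL_carrier by (intro Qm_carrier) blast
  have Qq: "Qf n w q \<in> CM n" using Tq by (rule Qf_carrier)
  show ?case
  proof (cases "p = q")
    case True
    have sq: "fst p * fst p = 1\<^sub>m (2^n)" using goodSL_sq Cons.prems by blast
    have "fst p * Qm n w (q # L) = (fst p * Qf n w q) * Qm n w L"
      unfolding Qm_Cons using cmD[OF T] cmD[OF Qq] cmD[OF QL] by (simp add: malg)
    also have "\<dots> = sg w (snd p) \<cdot>\<^sub>m Qm n w (q # L)"
      using QfT[OF T sq] True unfolding Qm_Cons using cmD[OF Qq] cmD[OF QL] by (simp add: malg)
    finally show ?thesis .
  next
    case False
    hence pL: "p \<in> set L" using Cons.prems by auto
    have c: "fst p * fst q = fst q * fst p" using goodSL_comm Cons.prems by (meson list.set_intros(1))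
    have "fst p * Qm n w (q # L) = (fst p * Qf n w q) * Qm n w L"
      unfolding Qm_Cons using cmD[OF T] cmD[OF Qq] cmD[OF QL] by (simp add: malg)
    also have "\<dots> = Qf n w q * (fst p * Qm n w L)"
      using comm_Qf[OF T Tq c] cmD[OF T] cmD[OF Qq] cmD[OF QL] by (simp add: malg)
    also have "\<dots> = sg w (snd p) \<cdot>\<^sub>m Qm n w (q # L)"
      using Cons.IH[OF gL pL] unfolding Qm_Cons using cmD[OF Qq] cmD[OF QL] by (simp add: malg)
    finally show ?thesis .
  qed
qed

lemma QT':
  assumes "goodSL n SL" "p \<in> set SL"
  shows "Qm n w SL * fst p = sg w (snd p) \<cdot>\<^sub>m Qm n w SL"
proof -
  have "fst p * Qm n w SL = Qm n w SL * fst p"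
  proof (rule Qm_comm)
    show "fst p \<in> CM n" using assms goodSL_carrier by blast
    show "\<forall>q\<in>set SL. fst q \<in> CM n \<and> fst p * fst q = fst q * fst p"
      using assms goodSL_carrier goodSL_comm by blast
  qed
  thus ?thesis using QT[OF assms] by simp
qed

lemma adjU_cancel: "unitary_n n U \<Longrightarrow> dim_row X = 2^n \<Longrightarrow> mat_adjoint U * (U * X) = X"
  unfolding unitary_n_def
  by (subst assoc_dim[symmetric]) (auto simp: carrier_matD)

lemma Uadj_cancel: "unitary_n n U \<Longrightarrow> dim_row X = 2^n \<Longrightarrow> U * (mat_adjoint U * X) = X"
  unfolding unitary_n_def
  by (subst assoc_dim[symmetric]) (auto simp: carrier_matD)

lemma unitary_carrier: "unitary_n n U \<Longrightarrow> U \<in> CM n \<and> mat_adjoint U \<in> CM n"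
  unfolding unitary_n_def by auto

lemma Qm_gate:
  assumes U: "unitary_n n U" and h: "\<forall>p\<in>set SL. fst p \<in> CM n"
  shows "Qm n w (map (\<lambda>(T, K). (U * T * mat_adjoint U, K)) SL) = U * Qm n w SL * mat_adjoint U"
  using h
proof (induction SL)
  case Nil
  have "U * 1\<^sub>m (2^n) = U" using cmD[OF conjunct1[OF unitary_carrier[OF U]]] by simp
  thus ?case using U unfolding unitary_n_def by simp
next
  case (Cons p L)
  obtain T K where p: "p = (T, K)" by force
  have T: "T \<in> CM n" using Cons.prems p by auto
  have QL: "Qm n w L \<in> CM n" using Cons.prems by (intro Qm_carrier) auto
  have Uc: "U \<in> CM n" "mat_adjoint U \<in> CM n" using unitary_carrier[OF U] by auto
  have "Qm n w (map (\<lambda>(T, K). (U * T * mat_adjoint U, K)) (p # L)) =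
     Qf n w (U * T * mat_adjoint U, K) * (U * Qm n w L * mat_adjoint U)"
    using Cons p by (simp add: Qm_Cons)
  also have "\<dots> = U * (Qf n w (T, K) * Qm n w L) * mat_adjoint U"
    unfolding Qf_def using cmD[OF T] cmD[OF QL] cmD[OF Uc(1)] cmD[OF Uc(2)]
    by (simp add: malg adjU_cancel[OF U] Uadj_cancel[OF U])
  finally show ?case using p by (simp add: Qm_Cons)
qed


definition pr :: "nat \<Rightarrow> complex mat \<Rightarrow> complex \<Rightarrow> complex mat" where
  "pr n S p = (1/2 :: complex) \<cdot>\<^sub>m (1\<^sub>m (2^n) + p \<cdot>\<^sub>m S)"

lemma projector_pr: "projector n S b = pr n S (if b then -1 else 1)"
  unfolding projector_def pr_def ..

lemma sg_single: "sg w {j} = (if w j then -1 else 1)"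
proof -
  have "{k \<in> {j}. w k} = (if w j then {j} else {})" by auto
  thus ?thesis unfolding sg_def sgs_def by auto
qed

lemma pr_carrier: "S \<in> CM n \<Longrightarrow> pr n S p \<in> CM n"
  unfolding pr_def by auto

lemma pr_mult:
  assumes S: "S \<in> CM n" and X: "X \<in> CM n" and SX: "S * X = c \<cdot>\<^sub>m X"
  shows "pr n S p * X = ((1 + p * c) / 2) \<cdot>\<^sub>m X"
proof -
  have "pr n S p * X = (1/2 :: complex) \<cdot>\<^sub>m (X + (p * c) \<cdot>\<^sub>m X)"
    unfolding pr_def using cmD[OF S] cmD[OF X] SX by (simp add: malg)
  also have "X + (p * c) \<cdot>\<^sub>m X = (1 + p * c) \<cdot>\<^sub>m X"
    using X by (simp add: add_smult_distrib_right_mat)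
  finally show ?thesis by (simp add: smult_smult_mat)
qed

lemma S_pr:
  assumes S: "S \<in> CM n" and sq: "S * S = 1\<^sub>m (2^n)" and p: "p * p = 1"
  shows "S * pr n S p = p \<cdot>\<^sub>m pr n S p"
proof -
  have "S * pr n S p = (1/2 :: complex) \<cdot>\<^sub>m (S + p \<cdot>\<^sub>m 1\<^sub>m (2^n))"
    unfolding pr_def using cmD[OF S] sq by (simp add: malg)
  also have "S + p \<cdot>\<^sub>m 1\<^sub>m (2^n) = p \<cdot>\<^sub>m 1\<^sub>m (2^n) + S" using S by (intro comm_add_mat) auto
  also have "\<dots> = p \<cdot>\<^sub>m (1\<^sub>m (2^n) + p \<cdot>\<^sub>m S)"
    using S p by (simp add: smult_add_dim smult_smult_mat cmD)
  finally show ?thesis unfolding pr_def by (simp add: smult_smult_mat ac_simps)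
qed

lemma pr_sq:
  assumes S: "S \<in> CM n" and sq: "S * S = 1\<^sub>m (2^n)" and p: "p * p = 1"
  shows "pr n S p * pr n S p = pr n S p"
  using pr_mult[OF S pr_carrier[OF S] S_pr[OF S sq p], of p] p by simp

lemma pr_comm:
  assumes S: "S \<in> CM n" and X: "X \<in> CM n" and c: "X * S = S * X"
  shows "pr n S p * X = X * pr n S p"
  unfolding pr_def using cmD[OF S] cmD[OF X] c by (simp add: malg)

lemma smult_uminus_mat: "x \<cdot>\<^sub>m (- A) = (-x) \<cdot>\<^sub>m (A :: complex mat)"
  by (rule eq_matI) auto

lemma pr_anti:
  assumes S: "S \<in> CM n" and sq: "S * S = 1\<^sub>m (2^n)" and p: "p * p = 1"
    and T: "T \<in> CM n" and a: "T * S = - (S * T)"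
  shows "pr n S p * (T * pr n S p) = 0\<^sub>m (2^n) (2^n)"
proof -
  have a': "S * T = - (T * S)" using a T S by simp
  have "pr n S p * T = T * pr n S (-p)"
    unfolding pr_def using cmD[OF S] cmD[OF T] a' by (simp add: malg smult_uminus_mat)
  moreover have "pr n S (-p) * pr n S p = 0\<^sub>m (2^n) (2^n)"
  proof -
    have "pr n S (-p) * pr n S p = ((1 + (-p) * p) / 2) \<cdot>\<^sub>m pr n S p"
      by (rule pr_mult[OF S pr_carrier[OF S] S_pr[OF S sq p]])
    thus ?thesis using p pr_carrier[OF S, of p] by auto
  qed
  ultimately show ?thesis
    using cmD[OF S] cmD[OF T] cmD[OF pr_carrier[OF S]]
    by (simp add: assoc_dim[symmetric]) (simp add: assoc_dim)
qed

lemma tr_pr: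
  assumes S: "S \<in> CM n" and Q: "Q \<in> CM n"
  shows "tr (pr n S p * Q) = tr Q / 2 + p / 2 * tr (S * Q)"
proof -
  have "pr n S p * Q = (1/2 :: complex) \<cdot>\<^sub>m (Q + p \<cdot>\<^sub>m (S * Q))"
    unfolding pr_def using cmD[OF S] cmD[OF Q] by (simp add: malg)
  hence "tr (pr n S p * Q) = 1/2 * (tr Q + p * tr (S * Q))"
    using S Q by (simp add: tr_smult[of _ "2^n"] tr_add[of _ "2^n"])
  thus ?thesis by (simp add: field_simps)
qed


lemma QfT_right:
  assumes T: "fst p \<in> CM n" and sq: "fst p * fst p = 1\<^sub>m (2^n)"
  shows "Qf n w p * fst p = sg w (snd p) \<cdot>\<^sub>m Qf n w p"
  using comm_Qf[OF T T refl, of w] QfT[OF T sq, of w] by simp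

lemma TF:
  assumes T: "T \<in> CM n" "T * T = 1\<^sub>m (2^n)" and T': "T' \<in> CM n" and c: "T * T' = T' * T"
    and fin: "finite K" "finite K'"
  shows "Qf n w (T, K) * Qf n w (T', K') = Qf n w (T, K) * Qf n w (T * T', symd K K')"
proof -
  define X where "X = Qf n w (T, K)"
  have X: "X \<in> CM n" unfolding X_def using T by (intro Qf_carrier) auto
  have XT: "X * T = sg w K \<cdot>\<^sub>m X" unfolding X_def using QfT_right[of "(T, K)" n w] T by simp
  have e1: "X * Qf n w (T', K') = X + sg w K' \<cdot>\<^sub>m (X * T')"
    unfolding Qf_def[of n w "(T', K')"] using cmD[OF X] cmD[OF T'] by (simp add: malg)
  have "X * (T * T') = (X * T) * T'" using cmD[OF X] cmD[OF T(1)] cmD[OF T'] by (simp add: malg)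
  also have "\<dots> = sg w K \<cdot>\<^sub>m (X * T')" using XT cmD[OF X] cmD[OF T'] by (simp add: malg)
  finally have XTT: "X * (T * T') = sg w K \<cdot>\<^sub>m (X * T')" .
  have "X * Qf n w (T * T', symd K K') = X + (sg w K * sg w K') \<cdot>\<^sub>m (X * (T * T'))"
    unfolding Qf_def[of n w "(T * T', symd K K')"] using cmD[OF X] cmD[OF T(1)] cmD[OF T'] fin
    by (simp add: mult_add_dim mult_smult_dim sg_symd del: assoc_dim)
  also have "\<dots> = X + sg w K' \<cdot>\<^sub>m (X * T')"
    unfolding XTT smult_smult_mat
  proof -
    have h: "sg w K * sg w K' * sg w K = sg w K'"
      using sg_sq[of w K] by (metis mult.commute mult.left_commute mult_1_right)
    show "X + (sg w K * sg w K' * sg w K) \<cdot>\<^sub>m (X * T') = X + sg w K' \<cdot>\<^sub>m (X * T')" unfolding h ..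
  qed
  finally show ?thesis using e1 unfolding X_def by simp
qed

definition fb :: "complex mat \<Rightarrow> nat set \<Rightarrow> complex mat \<Rightarrow> complex mat \<times> nat set \<Rightarrow> complex mat \<times> nat set" where
  "fb T K S = (\<lambda>(T', K'). if anticommute T' S then (T * T', symd K K') else (T', K'))"

lemma F:
  assumes T: "T \<in> CM n" "T * T = 1\<^sub>m (2^n)" "finite K"
    and L: "\<forall>q\<in>set L. fst q \<in> CM n \<and> finite (snd q) \<and> T * fst q = fst q * T"
  shows "Qf n w (T, K) * Qm n w L = Qf n w (T, K) * Qm n w (map (fb T K S) L)"
  using L
proof (induction L)
  case Nil thus ?case by simp
next
  case (Cons q L)
  obtain T' K' where q: "q = (T', K')" by force
  have T': "T' \<in> CM n" "finite K'" "T * T' = T' * T" using Cons.prems q by auto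
  define q' where "q' = fb T K S q"
  have TTT: "T * (T * T') = (T * T') * T"
    by (subst assoc_dim) (simp_all add: cmD[OF T(1)] cmD[OF T'(1)] T'(3))
  have q'c: "fst q' \<in> CM n" "T * fst q' = fst q' * T"
    unfolding q'_def fb_def q using T T' TTT by auto
  define P where "P = Qf n w (T, K)"
  have P: "P \<in> CM n" unfolding P_def using T by (intro Qf_carrier) auto
  have Qq: "Qf n w q \<in> CM n" using T' q by (intro Qf_carrier) auto
  have Qq': "Qf n w q' \<in> CM n" using q'c by (intro Qf_carrier) auto
  have QL: "Qm n w L \<in> CM n" using Cons.prems by (intro Qm_carrier) auto
  have QL': "Qm n w (map (fb T K S) L) \<in> CM n"
  proof (intro Qm_carrier ballI)
    fix r assume "r \<in> set (map (fb T K S) L)"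
    then obtain r0 where r0: "r0 \<in> set L" "r = fb T K S r0" by auto
    thus "fst r \<in> CM n" using Cons.prems T(1) unfolding fb_def by (auto split: prod.splits)
  qed
  have A: "P * Qf n w q = P * Qf n w q'"
  proof (cases "anticommute T' S")
    case True
    thus ?thesis unfolding P_def q'_def fb_def q using TF[OF T(1,2) T'(1) T'(3) T(3) T'(2)] by simp
  next
    case False
    thus ?thesis unfolding q'_def fb_def q by simp
  qed
  have B0: "fst q' * P = P * fst q'" unfolding P_def using comm_Qf[OF q'c(1), of "(T, K)"] T q'c by simp
  have B: "P * Qf n w q' = Qf n w q' * P" using comm_Qf[OF P q'c(1) B0[symmetric]] .
  have "P * Qm n w (q # L) = (P * Qf n w q) * Qm n w L"
    unfolding Qm_Cons using cmD[OF P] cmD[OF Qq] cmD[OF QL] by (simp add: malg)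
  also have "\<dots> = (Qf n w q' * P) * Qm n w L" unfolding A B ..
  also have "\<dots> = Qf n w q' * (P * Qm n w L)" using cmD[OF P] cmD[OF Qq'] cmD[OF QL] by (simp add: malg)
  also have "\<dots> = Qf n w q' * (P * Qm n w (map (fb T K S) L))" using Cons.IH Cons.prems unfolding P_def by simp
  also have "\<dots> = (P * Qf n w q') * Qm n w (map (fb T K S) L)"
    unfolding B using cmD[OF P] cmD[OF Qq'] cmD[OF QL'] by (simp add: malg)
  also have "\<dots> = P * Qm n w (map (fb T K S) (q # L))"
    unfolding q'_def using cmD[OF P] cmD[OF Qq'[unfolded q'_def]] cmD[OF QL'] by (simp add: malg Qm_Cons)
  finally show ?case unfolding P_def .
qed

lemma gen_group_carrier: "g \<in> gen_group n L \<Longrightarrow> \<forall>A\<in>set L. A \<in> CM n \<Longrightarrow> g \<in> CM n"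
  by (induction rule: gen_group.induct) auto

lemma TQ:
  "(\<forall>p\<in>set L. herm_pauli n (fst p)) \<Longrightarrow> pp n X \<Longrightarrow>
    (\<forall>g\<in>gen_group n (map fst L). \<forall>l. X * g \<noteq> l \<cdot>\<^sub>m 1\<^sub>m (2^n)) \<Longrightarrow> tr (X * Qm n w L) = 0"
proof (induction L arbitrary: X)
  case Nil
  have X: "X \<in> CM n" using Nil.prems pp_carrier by blast
  have "X \<noteq> l \<cdot>\<^sub>m 1\<^sub>m (2^n)" for l
  proof -
    have "X * 1\<^sub>m (2^n) \<noteq> l \<cdot>\<^sub>m 1\<^sub>m (2^n)" using Nil.prems(3) gen_group.one[of n "[]"] by simp
    thus ?thesis using X by simp
  qed
  thus ?case using pp_trace[OF Nil.prems(2)] X by auto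
next
  case (Cons p L)
  have X: "X \<in> CM n" using Cons.prems pp_carrier by blast
  have Th: "herm_pauli n (fst p)" using Cons.prems by auto
  have T: "fst p \<in> CM n" using Th herm_carrier by auto
  have hL: "\<forall>p\<in>set L. herm_pauli n (fst p)" using Cons.prems by auto
  have QL: "Qm n w L \<in> CM n" using hL herm_carrier by (intro Qm_carrier) blast
  have XT: "X * fst p \<in> CM n" using X T by simp
  have e: "X * Qm n w (p # L) = X * Qm n w L + sg w (snd p) \<cdot>\<^sub>m ((X * fst p) * Qm n w L)"
    unfolding Qm_Cons Qf_def using cmD[OF X] cmD[OF T] cmD[OF QL] by (simp add: malg)
  have i1: "tr (X * Qm n w L) = 0"
  proof (rule Cons.IH[OF hL Cons.prems(2)], intro ballI allI)
    fix g l assume "g \<in> gen_group n (map fst L)"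
    hence "g \<in> gen_group n (map fst (p # L))" using gen_group_mono by auto
    thus "X * g \<noteq> l \<cdot>\<^sub>m 1\<^sub>m (2^n)" using Cons.prems(3) by blast
  qed
  have i2: "tr ((X * fst p) * Qm n w L) = 0"
  proof (rule Cons.IH[OF hL pp_mult[OF Cons.prems(2) herm_pp[OF Th]]], intro ballI allI)
    fix g l assume g: "g \<in> gen_group n (map fst L)"
    have gc: "g \<in> CM n" using gen_group_carrier[OF g] hL herm_carrier by auto
    have "fst p * g \<in> gen_group n (map fst (p # L))" using gen_group_multT[OF g] by simp
    hence "X * (fst p * g) \<noteq> l \<cdot>\<^sub>m 1\<^sub>m (2^n)" using Cons.prems(3) by blast
    thus "X * fst p * g \<noteq> l \<cdot>\<^sub>m 1\<^sub>m (2^n)" using cmD[OF X] cmD[OF T] cmD[OF gc] by (simp add: malg)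
  qed
  show ?case unfolding e using i1 i2 XT QL X
    by (simp add: tr_add[of _ "2^n"] tr_smult[of _ "2^n"])
qed

lemma crux:
  assumes g: "goodSL n SL" and S: "herm_pauli n S"
    and ng: "\<not> (S \<in> gen_group n (map fst SL) \<or> - S \<in> gen_group n (map fst SL))"
  shows "tr (S * Qm n w SL) = 0"
proof (rule TQ)
  show "\<forall>p\<in>set SL. herm_pauli n (fst p)" using g goodSL_herm by blast
  show "pp n S" using S herm_pp by blast
  have ci: "ci n (map fst SL)" using g unfolding goodSL_def by auto
  have Sc: "S \<in> CM n" using S herm_carrier by blast
  have SS: "S * S = 1\<^sub>m (2^n)" using S herm_sq by blast
  show "\<forall>g\<in>gen_group n (map fst SL). \<forall>l. S * g \<noteq> l \<cdot>\<^sub>m 1\<^sub>m (2^n)"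
  proof (intro ballI allI notI)
    fix x l assume x: "x \<in> gen_group n (map fst SL)" and e: "S * x = l \<cdot>\<^sub>m 1\<^sub>m (2^n)"
    have xx: "x * x = 1\<^sub>m (2^n)" and xc: "x \<in> CM n" using group_sq[OF x ci] by auto
    have "S = S * (x * x)" using xx Sc by simp
    also have "\<dots> = (S * x) * x" using cmD[OF Sc] cmD[OF xc] by (simp add: malg)
    also have "\<dots> = l \<cdot>\<^sub>m x" using e xc by (simp add: smult_mult_dim cmD)
    finally have Sx: "S = l \<cdot>\<^sub>m x" .
    have "1\<^sub>m (2^n) = (l \<cdot>\<^sub>m x) * (l \<cdot>\<^sub>m x)" using SS Sx by simp
    also have "\<dots> = (l * l) \<cdot>\<^sub>m 1\<^sub>m (2^n)" using xx cmD[OF xc] by (simp add: malg)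
    finally have "(1\<^sub>m (2^n) :: complex mat) $$ (0, 0) = ((l * l) \<cdot>\<^sub>m 1\<^sub>m (2^n)) $$ (0, 0)" by simp
    hence "l * l = 1" by simp
    hence "(l - 1) * (l + 1) = 0" by (simp add: algebra_simps)
    hence "l = 1 \<or> l = -1" by (auto simp: add_eq_0_iff2)
    thus False
    proof
      assume "l = 1" thus False using Sx x ng by simp
    next
      assume "l = -1" hence "- S = x" using Sx by (simp add: smult_mone_mat)
      thus False using x ng by simp
    qed
  qed
qed


lemma comm_mult:
  assumes A: "A \<in> CM n" and B: "B \<in> CM n" and X: "X \<in> CM n"
    and a: "A * X = X * A" and b: "B * X = X * B"
  shows "(A * B) * X = X * (A * B)"
proof -
  have "(A * B) * X = A * (B * X)" using cmD[OF A] cmD[OF B] cmD[OF X] by (simp add: malg)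
  also have "\<dots> = A * (X * B)" using b by simp
  also have "\<dots> = (A * X) * B" using cmD[OF A] cmD[OF B] cmD[OF X] by (simp add: malg)
  also have "\<dots> = (X * A) * B" using a by simp
  also have "\<dots> = X * (A * B)" using cmD[OF A] cmD[OF B] cmD[OF X] by (simp add: malg)
  finally show ?thesis .
qed

lemma prod_herm:
  assumes T: "herm_pauli n T" and T': "herm_pauli n T'" and c: "T * T' = T' * T"
  shows "herm_pauli n (T * T')"
proof (rule pp_sq_herm)
  show "pp n (T * T')" using pp_mult herm_pp T T' by blast
  have Tc: "T \<in> CM n" and T'c: "T' \<in> CM n" using T T' herm_carrier by auto
  have "(T * T') * (T * T') = T * ((T' * T) * T')" using cmD[OF Tc] cmD[OF T'c] by (simp add: malg)
  also have "\<dots> = T * ((T * T') * T')" using c by simp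
  also have "\<dots> = (T * T) * (T' * T')" using cmD[OF Tc] cmD[OF T'c] by (simp add: malg)
  also have "\<dots> = 1\<^sub>m (2^n)" using herm_sq[OF T] herm_sq[OF T'] by simp
  finally show "(T * T') * (T * T') = 1\<^sub>m (2^n)" .
qed

lemma not_anti_comm:
  "herm_pauli n A \<Longrightarrow> herm_pauli n B \<Longrightarrow> \<not> anticommute A B \<Longrightarrow> A * B = B * A"
  using herm_comm unfolding anticommute_def by blast

lemma goodSL_intro:
  assumes "\<forall>p\<in>set SL. herm_pauli n (fst p) \<and> finite (snd p)"
    and "\<forall>p\<in>set SL. \<forall>q\<in>set SL. fst p * fst q = fst q * fst p"
  shows "goodSL n SL"
  using assms unfolding goodSL_def ci_def by auto

lemma gate_good:
  assumes U: "clifford_gate n U" and g: "goodSL n SL"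
  shows "goodSL n (map (\<lambda>(T, K). (U * T * mat_adjoint U, K)) SL)"
proof (rule goodSL_intro)
  have Uu: "unitary_n n U" using U unfolding clifford_gate_def by auto
  have Uc: "U \<in> CM n" "mat_adjoint U \<in> CM n" using unitary_carrier[OF Uu] by auto
  show "\<forall>p\<in>set (map (\<lambda>(T, K). (U * T * mat_adjoint U, K)) SL). herm_pauli n (fst p) \<and> finite (snd p)"
    using U g goodSL_herm goodSL_fin unfolding clifford_gate_def by fastforce
  show "\<forall>p\<in>set (map (\<lambda>(T, K). (U * T * mat_adjoint U, K)) SL). \<forall>q\<in>set (map (\<lambda>(T, K). (U * T * mat_adjoint U, K)) SL).
      fst p * fst q = fst q * fst p"
  proof (intro ballI)
    fix p q assume "p \<in> set (map (\<lambda>(T, K). (U * T * mat_adjoint U, K)) SL)"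
      "q \<in> set (map (\<lambda>(T, K). (U * T * mat_adjoint U, K)) SL)"
    then obtain p0 q0 where p0: "p0 \<in> set SL" "p = (U * fst p0 * mat_adjoint U, snd p0)"
      and q0: "q0 \<in> set SL" "q = (U * fst q0 * mat_adjoint U, snd q0)" by auto
    have A: "fst p0 \<in> CM n" "fst q0 \<in> CM n" using p0 q0 g goodSL_carrier by auto
    have c: "fst q0 * fst p0 = fst p0 * fst q0" using p0 q0 g goodSL_comm by auto
    have "fst p * fst q = U * (fst p0 * (fst q0 * mat_adjoint U))"
      using p0 q0 cmD[OF A(1)] cmD[OF A(2)] cmD[OF Uc(1)] cmD[OF Uc(2)] by (simp add: malg adjU_cancel[OF Uu])
    also have "\<dots> = U * (fst q0 * (fst p0 * mat_adjoint U))"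
      using comm_rot[OF A(2) A(1) Uc(2) c] by simp
    also have "\<dots> = fst q * fst p"
      using p0 q0 cmD[OF A(1)] cmD[OF A(2)] cmD[OF Uc(1)] cmD[OF Uc(2)] by (simp add: malg adjU_cancel[OF Uu])
    finally show "fst p * fst q = fst q * fst p" .
  qed
qed

lemma b2_good:
  assumes S: "herm_pauli n S" and g: "goodSL n SL" and na: "\<forall>T\<in>set (map fst SL). \<not> anticommute T S"
  shows "goodSL n (SL @ [(S, {j})])"
proof (rule goodSL_intro)
  show "\<forall>p\<in>set (SL @ [(S, {j})]). herm_pauli n (fst p) \<and> finite (snd p)"
    using S g goodSL_herm goodSL_fin by auto
  have cS: "fst p * S = S * fst p" if "p \<in> set SL" for p
    using not_anti_comm[OF goodSL_herm[OF g that] S] na that by auto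
  show "\<forall>p\<in>set (SL @ [(S, {j})]). \<forall>q\<in>set (SL @ [(S, {j})]). fst p * fst q = fst q * fst p"
    using cS goodSL_comm[OF g] by auto
qed

lemma b1_good:
  assumes S: "herm_pauli n S" and g: "goodSL n SL" and i: "i < length SL" and Ti: "SL ! i = (T, K)"
    and aT: "anticommute T S"
  shows "goodSL n (map (fb T K S) (take i SL @ drop (Suc i) SL) @ [(S, {j})])"
proof (rule goodSL_intro)
  have TSL: "(T, K) \<in> set SL" using i Ti nth_mem by metis
  have Th: "herm_pauli n T" and Tc: "T \<in> CM n" and fK: "finite K"
    using goodSL_herm[OF g TSL] goodSL_carrier[OF g TSL] goodSL_fin[OF g TSL] by auto
  have Sc: "S \<in> CM n" using S herm_carrier by blast
  define rest where "rest = take i SL @ drop (Suc i) SL"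
  have rs: "set rest \<subseteq> set SL" unfolding rest_def using set_take_subset set_drop_subset by fastforce
  define CA where "CA A \<longleftrightarrow> A \<in> CM n \<and> (\<forall>p\<in>set SL. A * fst p = fst p * A)" for A
  have CAp: "CA (fst p)" if "p \<in> set SL" for p
    unfolding CA_def using that goodSL_comm[OF g] goodSL_carrier[OF g] by auto
  have CAm: "CA (A * B)" if "CA A" "CA B" for A B
  proof -
    have A: "A \<in> CM n" and B: "B \<in> CM n" using that unfolding CA_def by auto
    have "(A * B) * fst p = fst p * (A * B)" if p: "p \<in> set SL" for p
      using comm_mult[OF A B goodSL_carrier[OF g p]] \<open>CA A\<close> \<open>CA B\<close> p unfolding CA_def by auto
    thus ?thesis unfolding CA_def using A B by auto
  qed
  have fb_fst: "fst (fb T K S q) = (if anticommute (fst q) S then T * fst q else fst q)" for q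
    unfolding fb_def by (auto split: prod.splits)
  have fb_snd: "snd (fb T K S q) = (if anticommute (fst q) S then symd K (snd q) else snd q)" for q
    unfolding fb_def by (auto split: prod.splits)
  have CAfb: "CA (fst (fb T K S q))" if "q \<in> set SL" for q
    unfolding fb_fst using CAp[OF that] CAp[OF TSL] CAm by auto
  have CAfb_comm: "A * fst (fb T K S q) = fst (fb T K S q) * A" if "CA A" "q \<in> set SL" for A q
  proof (cases "anticommute (fst q) S")
    case True
    have Ac: "A \<in> CM n" using that(1) unfolding CA_def by auto
    have qc: "fst q \<in> CM n" using that(2) goodSL_carrier[OF g] by blast
    have c1: "T * A = A * T" using that(1) TSL unfolding CA_def by (metis fst_conv)
    have c2: "fst q * A = A * fst q" using that unfolding CA_def by metis
    have "(T * fst q) * A = A * (T * fst q)"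
      by (rule comm_mult[OF Tc qc Ac c1 c2])
    thus ?thesis unfolding fb_fst using True by simp
  next
    case False thus ?thesis unfolding fb_fst using that unfolding CA_def by auto
  qed
  have fbS: "fst (fb T K S q) * S = S * fst (fb T K S q)" if q: "q \<in> set SL" for q
  proof (cases "anticommute (fst q) S")
    case True
    have qc: "fst q \<in> CM n" using q goodSL_carrier[OF g] by blast
    have a1: "T * S = - (S * T)" using aT unfolding anticommute_def .
    have a2: "fst q * S = - (S * fst q)" using True unfolding anticommute_def .
    have "(T * fst q) * S = T * (fst q * S)" using cmD[OF Tc] cmD[OF qc] cmD[OF Sc] by (simp add: malg)
    also have "\<dots> = - ((T * S) * fst q)" unfolding a2 using cmD[OF Tc] cmD[OF qc] cmD[OF Sc] by (simp add: malg)
    also have "\<dots> = S * (T * fst q)" unfolding a1 using cmD[OF Tc] cmD[OF qc] cmD[OF Sc] by (simp add: malg)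
    finally show ?thesis unfolding fb_fst using True by simp
  next
    case False
    thus ?thesis unfolding fb_fst using not_anti_comm[OF goodSL_herm[OF g q] S] by simp
  qed
  show "\<forall>p\<in>set (map (fb T K S) rest @ [(S, {j})]). herm_pauli n (fst p) \<and> finite (snd p)"
  proof
    fix p assume "p \<in> set (map (fb T K S) rest @ [(S, {j})])"
    then consider "p = (S, {j})" | q where "q \<in> set SL" "p = fb T K S q" using rs by auto
    thus "herm_pauli n (fst p) \<and> finite (snd p)"
    proof cases
      case 1 thus ?thesis using S by simp
    next
      case 2
      have "T * fst q = fst q * T" using goodSL_comm[OF g TSL 2(1)] by simp
      thus ?thesis using 2 fb_fst fb_snd prod_herm[OF Th goodSL_herm[OF g 2(1)]] goodSL_herm[OF g 2(1)]
        goodSL_fin[OF g 2(1)] fK symd_finite by auto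
    qed
  qed
  show "\<forall>p\<in>set (map (fb T K S) rest @ [(S, {j})]). \<forall>q\<in>set (map (fb T K S) rest @ [(S, {j})]). fst p * fst q = fst q * fst p"
  proof (intro ballI)
    fix p q assume p: "p \<in> set (map (fb T K S) rest @ [(S, {j})])" and q: "q \<in> set (map (fb T K S) rest @ [(S, {j})])"
    from p consider "p = (S, {j})" | p0 where "p0 \<in> set SL" "p = fb T K S p0" using rs by auto
    thus "fst p * fst q = fst q * fst p"
    proof cases
      case 1
      from q consider "q = (S, {j})" | q0 where "q0 \<in> set SL" "q = fb T K S q0" using rs by auto
      thus ?thesis
      proof cases
        case 1 thus ?thesis using \<open>p = (S, {j})\<close> by simp
      next
        case 2 thus ?thesis using \<open>p = (S, {j})\<close> fbS by auto
      qed
    next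
      case 2
      from q consider "q = (S, {j})" | q0 where "q0 \<in> set SL" "q = fb T K S q0" using rs by auto
      thus ?thesis
      proof cases
        case 1 thus ?thesis using 2 fbS by auto
      next
        case 3: 2
        show ?thesis using CAfb_comm[OF CAfb[OF 2(1)] 3(1)] 2 3 by simp
      qed
    qed
  qed
qed


lemma pr_keep:
  assumes S: "S \<in> CM n" and Xc: "X \<in> CM n" and M: "M \<in> CM n"
    and c: "X * S = S * X" and e: "X * M = a \<cdot>\<^sub>m M"
  shows "X * (pr n S p * M) = a \<cdot>\<^sub>m (pr n S p * M)"
proof -
  have P: "pr n S p \<in> CM n" using pr_carrier[OF S] .
  have "X * (pr n S p * M) = (X * pr n S p) * M" using cmD[OF Xc] cmD[OF P] cmD[OF M] by (simp add: malg)
  also have "\<dots> = (pr n S p * X) * M" using pr_comm[OF S Xc c] by simp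
  also have "\<dots> = pr n S p * (a \<cdot>\<^sub>m M)" using e cmD[OF Xc] cmD[OF P] cmD[OF M] by (simp add: malg)
  also have "\<dots> = a \<cdot>\<^sub>m (pr n S p * M)" using cmD[OF P] cmD[OF M] by (simp add: malg)
  finally show ?thesis .
qed

lemma fb_fst: "fst (fb T K S q) = (if anticommute (fst q) S then T * fst q else fst q)"
  unfolding fb_def by (auto split: prod.splits)
lemma fb_snd: "snd (fb T K S q) = (if anticommute (fst q) S then symd K (snd q) else snd q)"
  unfolding fb_def by (auto split: prod.splits)

lemma fbS:
  assumes S: "herm_pauli n S" and g: "goodSL n SL" and TSL: "(T, K) \<in> set SL" and aT: "anticommute T S"
    and q: "q \<in> set SL"
  shows "fst (fb T K S q) * S = S * fst (fb T K S q)"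
proof (cases "anticommute (fst q) S")
  case True
  have Tc: "T \<in> CM n" using goodSL_carrier[OF g TSL] by simp
  have Sc: "S \<in> CM n" using S herm_carrier by blast
  have qc: "fst q \<in> CM n" using q goodSL_carrier[OF g] by blast
  have a1: "T * S = - (S * T)" using aT unfolding anticommute_def .
  have a2: "fst q * S = - (S * fst q)" using True unfolding anticommute_def .
  have "(T * fst q) * S = T * (fst q * S)" using cmD[OF Tc] cmD[OF qc] cmD[OF Sc] by (simp add: malg)
  also have "\<dots> = - ((T * S) * fst q)" unfolding a2 using cmD[OF Tc] cmD[OF qc] cmD[OF Sc] by (simp add: malg)
  also have "\<dots> = S * (T * fst q)" unfolding a1 using cmD[OF Tc] cmD[OF qc] cmD[OF Sc] by (simp add: malg)
  finally show ?thesis unfolding fb_fst using True by simp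
next
  case False
  thus ?thesis unfolding fb_fst using not_anti_comm[OF goodSL_herm[OF g q] S] by simp
qed

lemma sat_iff: "finite K \<Longrightarrow> (\<epsilon> = 1 \<or> \<epsilon> = -1) \<Longrightarrow> sat_eq w (K, \<epsilon> = -1) \<longleftrightarrow> sg w K = \<epsilon>"
  unfolding sat_eq_def sg_def sgs_def by auto

section \<open>Soundness, per case\<close>

lemma sound_gate:
  assumes U: "clifford_gate n U" and g: "goodSL n SL" and M: "M \<in> CM n"
    and inv: "\<forall>p\<in>set SL. fst p * M = sg w (snd p) \<cdot>\<^sub>m M"
  shows "\<forall>p\<in>set (map (\<lambda>(T, K). (U * T * mat_adjoint U, K)) SL). fst p * (U * M) = sg w (snd p) \<cdot>\<^sub>m (U * M)"
proof
  have Uu: "unitary_n n U" using U unfolding clifford_gate_def by auto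
  have Uc: "U \<in> CM n" "mat_adjoint U \<in> CM n" using unitary_carrier[OF Uu] by auto
  fix p assume "p \<in> set (map (\<lambda>(T, K). (U * T * mat_adjoint U, K)) SL)"
  then obtain p0 where p0: "p0 \<in> set SL" "p = (U * fst p0 * mat_adjoint U, snd p0)" by auto
  have T: "fst p0 \<in> CM n" using goodSL_carrier[OF g p0(1)] .
  have "fst p * (U * M) = U * (fst p0 * M)"
    using p0 cmD[OF T] cmD[OF M] cmD[OF Uc(1)] cmD[OF Uc(2)] by (simp add: malg adjU_cancel[OF Uu])
  also have "\<dots> = sg w (snd p) \<cdot>\<^sub>m (U * M)" using inv p0 cmD[OF M] cmD[OF Uc(1)] by (simp add: malg)
  finally show "fst p * (U * M) = sg w (snd p) \<cdot>\<^sub>m (U * M)" .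
qed

lemma meas_a_facts:
  assumes S: "herm_pauli n S" and g: "goodSL n SL" and eps: "\<epsilon> = 1 \<or> \<epsilon> = -1"
    and I: "\<epsilon> \<cdot>\<^sub>m S = prod_mats n (map fst (nths SL I))"
  shows "S = \<epsilon> \<cdot>\<^sub>m prod_mats n (map fst (nths SL I))"
    and "\<forall>p\<in>set SL. fst p * S = S * fst p"
proof -
  have Sc: "S \<in> CM n" using S herm_carrier by blast
  show Se: "S = \<epsilon> \<cdot>\<^sub>m prod_mats n (map fst (nths SL I))"
    unfolding I[symmetric] smult_smult_mat using eps by auto
  have Pc: "prod_mats n (map fst (nths SL I)) \<in> CM n"
    using goodSL_carrier[OF g] set_nths_subset[of SL I] by (intro prod_mats_carrier) auto
  show "\<forall>p\<in>set SL. fst p * S = S * fst p"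
  proof
    fix p assume p: "p \<in> set SL"
    have T: "fst p \<in> CM n" using goodSL_carrier[OF g p] .
    have c: "fst p * prod_mats n (map fst (nths SL I)) = prod_mats n (map fst (nths SL I)) * fst p"
      using goodSL_carrier[OF g] goodSL_comm[OF g p] set_nths_subset[of SL I]
      by (intro prod_mats_comm[OF T]) auto
    show "fst p * S = S * fst p" unfolding Se using c cmD[OF T] cmD[OF Pc] by (simp add: malg)
  qed
qed

lemma sound_meas_a:
  assumes S: "herm_pauli n S" and g: "goodSL n SL" and M: "M \<in> CM n"
    and inv: "\<forall>p\<in>set SL. fst p * M = sg w (snd p) \<cdot>\<^sub>m M"
    and eps: "\<epsilon> = 1 \<or> \<epsilon> = -1"
    and I: "\<epsilon> \<cdot>\<^sub>m S = prod_mats n (map fst (nths SL I))"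
  shows "\<forall>p\<in>set SL. fst p * (projector n S (w j) * M) = sg w (snd p) \<cdot>\<^sub>m (projector n S (w j) * M)"
    and "projector n S (w j) * M \<noteq> 0\<^sub>m (2^n) (2^n) \<Longrightarrow>
         sat_eq w (symd {j} (symdiff_list (map snd (nths SL I))), \<epsilon> = -1)"
proof -
  have Sc: "S \<in> CM n" using S herm_carrier by blast
  note mf = meas_a_facts[OF S g eps I]
  show "\<forall>p\<in>set SL. fst p * (projector n S (w j) * M) = sg w (snd p) \<cdot>\<^sub>m (projector n S (w j) * M)"
    unfolding projector_pr using pr_keep[OF Sc goodSL_carrier[OF g] M] mf(2) inv by blast
  define KI where "KI = symdiff_list (map snd (nths SL I))"
  have fKI: "finite KI" unfolding KI_def using goodSL_fin[OF g] set_nths_subset[of SL I]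
    by (intro symdiff_list_finite) auto
  have PM: "prod_mats n (map fst (nths SL I)) * M = sg w KI \<cdot>\<^sub>m M"
    unfolding KI_def using goodSL_carrier[OF g] goodSL_fin[OF g] inv set_nths_subset[of SL I]
    by (intro prod_sign[OF M]) auto
  have Pc: "prod_mats n (map fst (nths SL I)) \<in> CM n"
    using goodSL_carrier[OF g] set_nths_subset[of SL I] by (intro prod_mats_carrier) auto
  have SM: "S * M = (\<epsilon> * sg w KI) \<cdot>\<^sub>m M"
    using PM cmD[OF Pc] cmD[OF M] by (subst mf(1)) (simp add: malg)
  define p where "p = (if w j then -1 else 1 :: complex)"
  have pe: "projector n S (w j) * M = ((1 + p * (\<epsilon> * sg w KI)) / 2) \<cdot>\<^sub>m M"
    unfolding projector_pr p_def[symmetric] by (rule pr_mult[OF Sc M SM])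
  assume nz: "projector n S (w j) * M \<noteq> 0\<^sub>m (2^n) (2^n)"
  have "1 + p * (\<epsilon> * sg w KI) \<noteq> 0"
  proof
    assume "1 + p * (\<epsilon> * sg w KI) = 0"
    hence "projector n S (w j) * M = 0 \<cdot>\<^sub>m M" unfolding pe by simp
    thus False using nz M by auto
  qed
  hence e1: "p * (\<epsilon> * sg w KI) = 1" using sg_cases[of w KI] eps unfolding p_def by (auto split: if_splits)
  have "sg w (symd {j} KI) = p * sg w KI" using sg_symd[of "{j}" KI w] fKI sg_single[of w j] unfolding p_def by simp
  also have "\<dots> = \<epsilon>"
  proof -
    have ee: "\<epsilon> * \<epsilon> = 1" using eps by auto
    have "p * sg w KI = p * sg w KI * (\<epsilon> * \<epsilon>)" using ee by simp
    also have "\<dots> = \<epsilon> * (p * (\<epsilon> * sg w KI))" by (simp add: ac_simps)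
    also have "\<dots> = \<epsilon>" using e1 by simp
    finally show ?thesis .
  qed
  finally have "sg w (symd {j} KI) = \<epsilon>" .
  thus "sat_eq w (symd {j} (symdiff_list (map snd (nths SL I))), \<epsilon> = -1)"
    unfolding KI_def[symmetric] using sat_iff[OF symd_finite[OF _ fKI] eps, of "{j}" w] by simp
qed

lemma sound_meas_b1:
  assumes S: "herm_pauli n S" and g: "goodSL n SL" and M: "M \<in> CM n"
    and inv: "\<forall>p\<in>set SL. fst p * M = sg w (snd p) \<cdot>\<^sub>m M"
    and i: "i < length SL" and Ti: "SL ! i = (T, K)" and aT: "anticommute T S"
  shows "\<forall>p\<in>set (map (fb T K S) (take i SL @ drop (Suc i) SL) @ [(S, {j})]).
     fst p * (projector n S (w j) * M) = sg w (snd p) \<cdot>\<^sub>m (projector n S (w j) * M)"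
proof
  have Sc: "S \<in> CM n" using S herm_carrier by blast
  have SS: "S * S = 1\<^sub>m (2^n)" using S herm_sq by blast
  have TSL: "(T, K) \<in> set SL" using i Ti nth_mem by metis
  have Tc: "T \<in> CM n" and fK: "finite K" using goodSL_carrier[OF g TSL] goodSL_fin[OF g TSL] by auto
  have rs: "set (take i SL @ drop (Suc i) SL) \<subseteq> set SL" using set_take_subset set_drop_subset by fastforce
  define p where "p = (if w j then -1 else 1 :: complex)"
  have pp1: "p * p = 1" unfolding p_def by auto
  fix q assume "q \<in> set (map (fb T K S) (take i SL @ drop (Suc i) SL) @ [(S, {j})])"
  then consider "q = (S, {j})" | q0 where "q0 \<in> set SL" "q = fb T K S q0" using rs by auto
  thus "fst q * (projector n S (w j) * M) = sg w (snd q) \<cdot>\<^sub>m (projector n S (w j) * M)"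
  proof cases
    case 1
    have P: "pr n S p \<in> CM n" using pr_carrier[OF Sc] .
    have "S * (pr n S p * M) = (S * pr n S p) * M" using cmD[OF Sc] cmD[OF P] cmD[OF M] by (simp add: malg)
    also have "\<dots> = p \<cdot>\<^sub>m (pr n S p * M)" unfolding S_pr[OF Sc SS pp1] using cmD[OF P] cmD[OF M] by (simp add: malg)
    finally show ?thesis using 1 sg_single[of w j] unfolding projector_pr p_def by simp
  next
    case 2
    have q0c: "fst q0 \<in> CM n" using goodSL_carrier[OF g 2(1)] .
    have c: "fst (fb T K S q0) * S = S * fst (fb T K S q0)" by (rule fbS[OF S g TSL aT 2(1)])
    have e: "fst (fb T K S q0) * M = sg w (snd (fb T K S q0)) \<cdot>\<^sub>m M"
    proof (cases "anticommute (fst q0) S")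
      case True
      have "(T * fst q0) * M = T * (fst q0 * M)" using cmD[OF Tc] cmD[OF q0c] cmD[OF M] by (simp add: malg)
      also have "\<dots> = (sg w (snd q0) * sg w K) \<cdot>\<^sub>m M"
      proof -
        have TM: "T * M = sg w K \<cdot>\<^sub>m M" using inv TSL by (metis fst_conv snd_conv)
        show ?thesis using inv 2(1) TM cmD[OF Tc] cmD[OF M] by (simp add: malg)
      qed
      also have "\<dots> = sg w (symd K (snd q0)) \<cdot>\<^sub>m M" using sg_symd[OF fK goodSL_fin[OF g 2(1)]] by (simp add: ac_simps)
      finally show ?thesis unfolding fb_fst fb_snd using True by simp
    next
      case False thus ?thesis unfolding fb_fst fb_snd using inv 2(1) by simp
    qed
    have fc: "fst (fb T K S q0) \<in> CM n" unfolding fb_fst using Tc q0c by auto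
    show ?thesis using pr_keep[OF Sc fc M c e] 2 unfolding projector_pr by simp
  qed
qed

lemma sound_meas_b2:
  assumes S: "herm_pauli n S" and g: "goodSL n SL" and M: "M \<in> CM n"
    and inv: "\<forall>p\<in>set SL. fst p * M = sg w (snd p) \<cdot>\<^sub>m M"
    and na: "\<forall>T\<in>set (map fst SL). \<not> anticommute T S"
  shows "\<forall>p\<in>set (SL @ [(S, {j})]).
     fst p * (projector n S (w j) * M) = sg w (snd p) \<cdot>\<^sub>m (projector n S (w j) * M)"
proof
  have Sc: "S \<in> CM n" using S herm_carrier by blast
  have SS: "S * S = 1\<^sub>m (2^n)" using S herm_sq by blast
  define p where "p = (if w j then -1 else 1 :: complex)"
  have pp1: "p * p = 1" unfolding p_def by auto
  fix q assume "q \<in> set (SL @ [(S, {j})])"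
  then consider "q = (S, {j})" | "q \<in> set SL" by auto
  thus "fst q * (projector n S (w j) * M) = sg w (snd q) \<cdot>\<^sub>m (projector n S (w j) * M)"
  proof cases
    case 1
    have P: "pr n S p \<in> CM n" using pr_carrier[OF Sc] .
    have "S * (pr n S p * M) = (S * pr n S p) * M" using cmD[OF Sc] cmD[OF P] cmD[OF M] by (simp add: malg)
    also have "\<dots> = p \<cdot>\<^sub>m (pr n S p * M)" unfolding S_pr[OF Sc SS pp1] using cmD[OF P] cmD[OF M] by (simp add: malg)
    finally show ?thesis using 1 sg_single[of w j] unfolding projector_pr p_def by simp
  next
    case 2
    have c: "fst q * S = S * fst q" using not_anti_comm[OF goodSL_herm[OF g 2] S] na 2 by auto
    show ?thesis using pr_keep[OF Sc goodSL_carrier[OF g 2] M c] inv 2 unfolding projector_pr by simp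
  qed
qed


lemma goodSL_Qm: "goodSL n SL \<Longrightarrow> Qm n w SL \<in> CM n"
  using goodSL_carrier by (intro Qm_carrier) blast

lemma compl_gate:
  assumes U: "clifford_gate n U" and g: "goodSL n SL" and M: "M \<in> CM n" and X: "X \<in> CM n"
    and QX: "Qm n w SL = M * X" and t: "tr (Qm n w SL) \<noteq> 0"
  shows "\<exists>X'. X' \<in> CM n \<and> Qm n w (map (\<lambda>(T, K). (U * T * mat_adjoint U, K)) SL) = (U * M) * X' \<and>
     tr (Qm n w (map (\<lambda>(T, K). (U * T * mat_adjoint U, K)) SL)) \<noteq> 0"
proof -
  have Uu: "unitary_n n U" using U unfolding clifford_gate_def by auto
  have Uc: "U \<in> CM n" "mat_adjoint U \<in> CM n" using unitary_carrier[OF Uu] by auto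
  have Q: "Qm n w SL \<in> CM n" using goodSL_Qm[OF g] .
  have e: "Qm n w (map (\<lambda>(T, K). (U * T * mat_adjoint U, K)) SL) = U * Qm n w SL * mat_adjoint U"
    using Qm_gate[OF Uu] goodSL_carrier[OF g] by blast
  have UU: "mat_adjoint U * U = 1\<^sub>m (2^n)" using Uu unfolding unitary_n_def by auto
  have "tr (U * Qm n w SL * mat_adjoint U) = tr (U * (Qm n w SL * mat_adjoint U))"
    using cmD[OF Uc(1)] cmD[OF Uc(2)] cmD[OF Q] by (simp add: malg)
  also have "\<dots> = tr ((Qm n w SL * mat_adjoint U) * U)" using Uc Q by (intro tr_cyc) auto
  also have "\<dots> = tr (Qm n w SL)" using cmD[OF Uc(1)] cmD[OF Uc(2)] cmD[OF Q] UU by (simp add: malg)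
  finally have tt: "tr (U * Qm n w SL * mat_adjoint U) = tr (Qm n w SL)" .
  show ?thesis
  proof (intro exI conjI)
    show "X * mat_adjoint U \<in> CM n" using X Uc by simp
    show "Qm n w (map (\<lambda>(T, K). (U * T * mat_adjoint U, K)) SL) = (U * M) * (X * mat_adjoint U)"
      unfolding e QX using cmD[OF Uc(1)] cmD[OF Uc(2)] cmD[OF M] cmD[OF X] by (simp add: malg)
    show "tr (Qm n w (map (\<lambda>(T, K). (U * T * mat_adjoint U, K)) SL)) \<noteq> 0" unfolding e tt using t .
  qed
qed

lemma compl_meas_a:
  assumes S: "herm_pauli n S" and g: "goodSL n SL" and M: "M \<in> CM n" and X: "X \<in> CM n"
    and QX: "Qm n w SL = M * X"
    and eps: "\<epsilon> = 1 \<or> \<epsilon> = -1"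
    and I: "\<epsilon> \<cdot>\<^sub>m S = prod_mats n (map fst (nths SL I))"
    and sat: "sat_eq w (symd {j} (symdiff_list (map snd (nths SL I))), \<epsilon> = -1)"
  shows "Qm n w SL = (projector n S (w j) * M) * X"
proof -
  have Sc: "S \<in> CM n" using S herm_carrier by blast
  have Q: "Qm n w SL \<in> CM n" using goodSL_Qm[OF g] .
  note mf = meas_a_facts[OF S g eps I]
  define KI where "KI = symdiff_list (map snd (nths SL I))"
  have fKI: "finite KI" unfolding KI_def using goodSL_fin[OF g] set_nths_subset[of SL I]
    by (intro symdiff_list_finite) auto
  have PM: "prod_mats n (map fst (nths SL I)) * Qm n w SL = sg w KI \<cdot>\<^sub>m Qm n w SL"
    unfolding KI_def using goodSL_carrier[OF g] goodSL_fin[OF g] QT[OF g] set_nths_subset[of SL I]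
    by (intro prod_sign[OF Q]) auto
  have Pc: "prod_mats n (map fst (nths SL I)) \<in> CM n"
    using goodSL_carrier[OF g] set_nths_subset[of SL I] by (intro prod_mats_carrier) auto
  have SM: "S * Qm n w SL = (\<epsilon> * sg w KI) \<cdot>\<^sub>m Qm n w SL"
    using PM cmD[OF Pc] cmD[OF Q] by (subst mf(1)) (simp add: malg)
  define p where "p = (if w j then -1 else 1 :: complex)"
  have pe: "projector n S (w j) * Qm n w SL = ((1 + p * (\<epsilon> * sg w KI)) / 2) \<cdot>\<^sub>m Qm n w SL"
    unfolding projector_pr p_def[symmetric] by (rule pr_mult[OF Sc Q SM])
  have "sg w (symd {j} KI) = \<epsilon>"
    using sat unfolding KI_def[symmetric] using sat_iff[OF symd_finite[OF _ fKI] eps, of "{j}" w] by simp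
  moreover have "sg w (symd {j} KI) = p * sg w KI" using sg_symd[of "{j}" KI w] fKI sg_single[of w j] unfolding p_def by simp
  ultimately have "p * (\<epsilon> * sg w KI) = 1" using eps by (auto simp: ac_simps)
  hence "projector n S (w j) * Qm n w SL = Qm n w SL" unfolding pe by simp
  hence "Qm n w SL = projector n S (w j) * (M * X)" using QX by simp
  thus ?thesis using cmD[OF pr_carrier[OF Sc]] cmD[OF M] cmD[OF X] unfolding projector_pr by (simp add: malg)
qed

lemma Qf_S: "Qf n w (S, {j}) = 2 \<cdot>\<^sub>m pr n S (if w j then -1 else 1)"
  unfolding Qf_def pr_def by (simp add: smult_smult_mat sg_single)

lemma compl_meas_b2:
  assumes S: "herm_pauli n S" and g: "goodSL n SL" and M: "M \<in> CM n" and X: "X \<in> CM n"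
    and QX: "Qm n w SL = M * X" and t: "tr (Qm n w SL) \<noteq> 0"
    and ng: "\<not> (S \<in> gen_group n (map fst SL) \<or> - S \<in> gen_group n (map fst SL))"
    and na: "\<forall>T\<in>set (map fst SL). \<not> anticommute T S"
  shows "\<exists>X'. X' \<in> CM n \<and> Qm n w (SL @ [(S, {j})]) = (projector n S (w j) * M) * X' \<and>
     tr (Qm n w (SL @ [(S, {j})])) \<noteq> 0"
proof -
  have Sc: "S \<in> CM n" using S herm_carrier by blast
  have Q: "Qm n w SL \<in> CM n" using goodSL_Qm[OF g] .
  define p where "p = (if w j then -1 else 1 :: complex)"
  define P where "P = pr n S p"
  have Pc: "P \<in> CM n" unfolding P_def using pr_carrier[OF Sc] .
  have e1: "Qm n w (SL @ [(S, {j})]) = Qm n w SL * (2 \<cdot>\<^sub>m P)"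
    using Qm_append[of SL n "[(S, {j})]" w] goodSL_carrier[OF g] Sc cmD[OF pr_carrier[OF Sc]]
    by (simp add: Qm_Cons Qf_S P_def p_def)
  have cS: "S * Qm n w SL = Qm n w SL * S"
    using not_anti_comm[OF goodSL_herm[OF g] S] na goodSL_carrier[OF g]
    by (intro Qm_comm[OF Sc]) (metis image_eqI list.set_map)
  have cP: "P * Qm n w SL = Qm n w SL * P" unfolding P_def by (rule pr_comm[OF Sc Q cS[symmetric]])
  show ?thesis
  proof (intro exI conjI)
    show "2 \<cdot>\<^sub>m X \<in> CM n" using X by simp
    have "Qm n w SL * (2 \<cdot>\<^sub>m P) = 2 \<cdot>\<^sub>m (P * Qm n w SL)" unfolding cP using cmD[OF Q] cmD[OF Pc] by (simp add: malg)
    also have "\<dots> = (P * M) * (2 \<cdot>\<^sub>m X)" unfolding QX using cmD[OF Pc] cmD[OF M] cmD[OF X] by (simp add: malg)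
    finally show "Qm n w (SL @ [(S, {j})]) = (projector n S (w j) * M) * (2 \<cdot>\<^sub>m X)"
      unfolding e1 projector_pr P_def p_def .
    have z: "tr (S * Qm n w SL) = 0" by (rule crux[OF g S ng])
    have "tr (Qm n w SL * (2 \<cdot>\<^sub>m P)) = 2 * tr (P * Qm n w SL)"
      unfolding cP using cmD[OF Q] cmD[OF Pc] Q Pc by (simp add: malg tr_smult[of _ "2^n"])
    also have "\<dots> = tr (Qm n w SL)" unfolding P_def tr_pr[OF Sc Q] z by simp
    finally show "tr (Qm n w (SL @ [(S, {j})])) \<noteq> 0" unfolding e1 using t by simp
  qed
qed


lemma tr_uminus: "A \<in> carrier_mat N N \<Longrightarrow> tr (- A) = - tr A"
  unfolding tr_def by (auto simp: sum_negf[symmetric] intro!: sum.cong)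

lemma compl_meas_b1:
  assumes S: "herm_pauli n S" and g: "goodSL n SL" and M: "M \<in> CM n" and X: "X \<in> CM n"
    and QX: "Qm n w SL = M * X" and t: "tr (Qm n w SL) \<noteq> 0"
    and i: "i < length SL" and Ti: "SL ! i = (T, K)" and aT: "anticommute T S"
  shows "\<exists>X'. X' \<in> CM n \<and>
     Qm n w (map (fb T K S) (take i SL @ drop (Suc i) SL) @ [(S, {j})]) = (projector n S (w j) * M) * X' \<and>
     tr (Qm n w (map (fb T K S) (take i SL @ drop (Suc i) SL) @ [(S, {j})])) \<noteq> 0"
proof -
  have Sc: "S \<in> CM n" using S herm_carrier by blast
  have SS: "S * S = 1\<^sub>m (2^n)" using S herm_sq by blast
  have TSL: "(T, K) \<in> set SL" using i Ti nth_mem by metis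
  have Tc: "T \<in> CM n" and fK: "finite K" and TT: "T * T = 1\<^sub>m (2^n)"
    using goodSL_carrier[OF g TSL] goodSL_fin[OF g TSL] goodSL_sq[OF g TSL] by auto
  define rest where "rest = take i SL @ drop (Suc i) SL"
  have rs: "set rest \<subseteq> set SL" unfolding rest_def using set_take_subset set_drop_subset by fastforce
  have rs1: "set (take i SL) \<subseteq> set SL" by (rule set_take_subset)
  have rs2: "set (drop (Suc i) SL) \<subseteq> set SL" by (rule set_drop_subset)
  define p where "p = (if w j then -1 else 1 :: complex)"
  have pp1: "p * p = 1" unfolding p_def by auto
  define P where "P = pr n S p"
  have Pc: "P \<in> CM n" unfolding P_def using pr_carrier[OF Sc] .
  define p0 where "p0 = (T, K)"
  define Q where "Q = Qm n w SL"
  have Qc: "Q \<in> CM n" unfolding Q_def using goodSL_Qm[OF g] .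
  have F0c: "Qf n w p0 \<in> CM n" unfolding p0_def using Tc by (intro Qf_carrier) auto
  have cSL: "\<forall>q\<in>set SL. fst q \<in> CM n" using goodSL_carrier[OF g] by blast
  have Qtc: "Qm n w (take i SL) \<in> CM n" using cSL rs1 by (intro Qm_carrier) blast
  have Qdc: "Qm n w (drop (Suc i) SL) \<in> CM n" using cSL rs2 by (intro Qm_carrier) blast
  have dec: "Q = Qf n w p0 * Qm n w rest"
  proof -
    have SLe: "SL = take i SL @ p0 # drop (Suc i) SL" unfolding p0_def using id_take_nth_drop[OF i] Ti by simp
    have "Q = Qm n w (take i SL) * (Qf n w p0 * Qm n w (drop (Suc i) SL))"
      unfolding Q_def using Qm_append[of "take i SL" n "p0 # drop (Suc i) SL" w] cSL rs1 rs2 SLe Tc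
      by (metis (no_types, lifting) Qm_Cons fst_conv in_mono list.set_intros(1) p0_def set_ConsD)
    also have "\<dots> = (Qm n w (take i SL) * Qf n w p0) * Qm n w (drop (Suc i) SL)"
      using cmD[OF Qtc] cmD[OF F0c] cmD[OF Qdc] by (simp add: malg)
    also have "Qm n w (take i SL) * Qf n w p0 = Qf n w p0 * Qm n w (take i SL)"
    proof (rule Qm_comm[OF F0c, symmetric], intro ballI conjI)
      fix q assume q: "q \<in> set (take i SL)"
      hence qS: "q \<in> set SL" using rs1 by blast
      show "fst q \<in> CM n" using cSL qS by blast
      have "fst q * Qf n w p0 = Qf n w p0 * fst q"
        unfolding p0_def using comm_Qf[of "fst q" n "(T, K)" w] cSL qS Tc goodSL_comm[OF g qS TSL] by simp
      thus "Qf n w p0 * fst q = fst q * Qf n w p0" by simp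
    qed
    also have "(Qf n w p0 * Qm n w (take i SL)) * Qm n w (drop (Suc i) SL) = Qf n w p0 * Qm n w rest"
    proof -
      have ap: "Qm n w (take i SL @ drop (Suc i) SL) = Qm n w (take i SL) * Qm n w (drop (Suc i) SL)"
        by (rule Qm_append) (use cSL rs1 rs2 in blast)+
      show ?thesis unfolding rest_def ap using cmD[OF Qtc] cmD[OF F0c] cmD[OF Qdc] by (simp add: malg)
    qed
    finally show ?thesis .
  qed
  define R where "R = Qm n w (map (fb T K S) rest)"
  have fbc: "fst (fb T K S q) \<in> CM n" if "q \<in> set SL" for q
    unfolding fb_fst using Tc cSL that by auto
  have Rc: "R \<in> CM n" unfolding R_def using fbc rs by (intro Qm_carrier) auto
  have QR: "Q = Qf n w p0 * R"
    unfolding dec R_def p0_def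
  proof (rule F[OF Tc TT fK], intro ballI conjI)
    fix q assume q: "q \<in> set rest"
    thus "fst q \<in> CM n" "finite (snd q)" using rs cSL goodSL_fin[OF g] by blast+
    show "T * fst q = fst q * T" using goodSL_comm[OF g TSL] q rs by fastforce
  qed
  have RS: "S * R = R * S"
    unfolding R_def
  proof (rule Qm_comm[OF Sc], intro ballI conjI)
    fix r assume "r \<in> set (map (fb T K S) rest)"
    then obtain q where q: "q \<in> set SL" "r = fb T K S q" using rs by auto
    show "fst r \<in> CM n" using fbc q by simp
    show "S * fst r = fst r * S" using fbS[OF S g TSL aT q(1)] q by simp
  qed
  have RP: "P * R = R * P" unfolding P_def by (rule pr_comm[OF Sc Rc RS[symmetric]])
  have a1: "T * S = - (S * T)" using aT unfolding anticommute_def .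
  have PTP: "P * (T * P) = 0\<^sub>m (2^n) (2^n)" unfolding P_def by (rule pr_anti[OF Sc SS pp1 Tc a1])
  have PP: "P * P = P" unfolding P_def by (rule pr_sq[OF Sc SS pp1])
  have PFP: "P * (Qf n w p0 * P) = P"
  proof -
    have "P * (Qf n w p0 * P) = P * P + sg w K \<cdot>\<^sub>m (P * (T * P))"
      unfolding p0_def Qf_def using cmD[OF Pc] cmD[OF Tc] by (simp add: malg)
    also have "\<dots> = P" unfolding PP PTP using Pc by simp
    finally show ?thesis .
  qed
  have PQP: "P * (Q * P) = P * R"
  proof -
    have "P * (Q * P) = P * (Qf n w p0 * (R * P))" unfolding QR using cmD[OF Pc] cmD[OF F0c] cmD[OF Rc] by (simp add: malg)
    also have "\<dots> = (P * (Qf n w p0 * P)) * R" unfolding RP[symmetric] using cmD[OF Pc] cmD[OF F0c] cmD[OF Rc] by (simp add: malg)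
    finally show ?thesis unfolding PFP .
  qed
  have e1: "Qm n w (map (fb T K S) rest @ [(S, {j})]) = R * (2 \<cdot>\<^sub>m P)"
  proof -
    have ap: "Qm n w (map (fb T K S) rest @ [(S, {j})]) = Qm n w (map (fb T K S) rest) * Qm n w [(S, {j})]"
      by (rule Qm_append) (use fbc rs Sc in auto)
    have "Qm n w [(S, {j})] = 2 \<cdot>\<^sub>m P" unfolding Qm_Cons Qm_Nil Qf_S P_def p_def
      using cmD[OF pr_carrier[OF Sc]] by simp
    thus ?thesis unfolding ap R_def by simp
  qed
  have e2: "R * (2 \<cdot>\<^sub>m P) = 2 \<cdot>\<^sub>m (P * (Q * P))" unfolding PQP RP using cmD[OF Rc] cmD[OF Pc] by (simp add: malg)
  show ?thesis
  proof (intro exI conjI)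
    show "2 \<cdot>\<^sub>m (X * P) \<in> CM n" using X Pc by simp
    show "Qm n w (map (fb T K S) (take i SL @ drop (Suc i) SL) @ [(S, {j})]) = (projector n S (w j) * M) * (2 \<cdot>\<^sub>m (X * P))"
      unfolding rest_def[symmetric] e1 e2 unfolding Q_def QX projector_pr p_def[symmetric] P_def[symmetric]
      using cmD[OF Pc] cmD[OF M] cmD[OF X] by (simp add: malg)
    define \<sigma> where "\<sigma> = sg w K"
    have TQ1: "T * Q = \<sigma> \<cdot>\<^sub>m Q" unfolding Q_def \<sigma>_def using QT[OF g TSL] by simp
    have QT1: "Q * T = \<sigma> \<cdot>\<^sub>m Q" unfolding Q_def \<sigma>_def using QT'[OF g TSL] by simp
    have ss: "\<sigma> * \<sigma> = 1" unfolding \<sigma>_def by simp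
    have Qe: "Q = \<sigma> \<cdot>\<^sub>m (T * Q)" unfolding TQ1 smult_smult_mat ss by simp
    have SQc: "S * Q \<in> CM n" using Sc Qc by simp
    have "tr (S * Q) = \<sigma> * tr (S * (T * Q))"
    proof -
      have "S * Q = \<sigma> \<cdot>\<^sub>m (S * (T * Q))"
        by (subst Qe) (simp add: mult_smult_dim cmD[OF Sc] cmD[OF Tc] cmD[OF Qc])
      moreover have "S * (T * Q) \<in> CM n" using Sc Tc Qc by simp
      ultimately show ?thesis using tr_smult by metis
    qed
    also have "S * (T * Q) = - (T * (S * Q))"
    proof -
      have "S * (T * Q) = (S * T) * Q" using cmD[OF Sc] cmD[OF Tc] cmD[OF Qc] by (simp add: malg)
      also have "S * T = - (T * S)" using a1 Sc Tc by simp
      finally show ?thesis using cmD[OF Sc] cmD[OF Tc] cmD[OF Qc] by (simp add: malg)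
    qed
    also have "tr (- (T * (S * Q))) = - tr (T * (S * Q))" using Tc SQc by (intro tr_uminus[of _ "2^n"]) simp
    also have "tr (T * (S * Q)) = tr ((S * Q) * T)" using Tc SQc by (intro tr_cyc)
    also have "(S * Q) * T = \<sigma> \<cdot>\<^sub>m (S * Q)" using QT1 cmD[OF Sc] cmD[OF Tc] cmD[OF Qc] by (simp add: malg)
    also have "tr (\<sigma> \<cdot>\<^sub>m (S * Q)) = \<sigma> * tr (S * Q)" using SQc by (rule tr_smult)
    finally have "tr (S * Q) = - (\<sigma> * \<sigma>) * tr (S * Q)" by (simp add: mult.assoc)
    hence z: "tr (S * Q) = 0" using ss by simp
    have "tr (2 \<cdot>\<^sub>m (P * (Q * P))) = 2 * tr (P * (Q * P))" using Pc Qc by (intro tr_smult[of _ "2^n"]) simp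
    also have "tr (P * (Q * P)) = tr ((Q * P) * P)" using Pc Qc by (intro tr_cyc) auto
    also have "(Q * P) * P = Q * P" using PP cmD[OF Pc] cmD[OF Qc] by (simp add: malg)
    also have "tr (Q * P) = tr (P * Q)" using Pc Qc by (intro tr_cyc) auto
    also have "tr (P * Q) = tr Q / 2 + p / 2 * tr (S * Q)" unfolding P_def by (rule tr_pr[OF Sc Qc])
    finally have "tr (2 \<cdot>\<^sub>m (P * (Q * P))) = tr Q" unfolding z by simp
    thus "tr (Qm n w (map (fb T K S) (take i SL @ drop (Suc i) SL) @ [(S, {j})])) \<noteq> 0"
      unfolding rest_def[symmetric] e1 e2 using t unfolding Q_def by simp
  qed
qed


lemma projector_carrier: "S \<in> CM n \<Longrightarrow> projector n S b \<in> CM n"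
  unfolding projector_pr by (rule pr_carrier)

lemma clifford_circuit_Cons: "clifford_circuit n (op # C) \<longleftrightarrow>
   (case op of Gate U \<Rightarrow> clifford_gate n U | Meas S \<Rightarrow> herm_pauli n S) \<and> clifford_circuit n C"
  unfolding clifford_circuit_def by auto

lemma kraus_carrier: "clifford_circuit n C \<Longrightarrow> kraus n C j w \<in> CM n"
proof (induction C arbitrary: j)
  case Nil thus ?case by simp
next
  case (Cons op C)
  show ?case
  proof (cases op)
    case (Gate U)
    hence "clifford_gate n U" "clifford_circuit n C" using Cons.prems clifford_circuit_Cons by auto
    hence "U \<in> CM n" "kraus n C j w \<in> CM n" using Cons.IH unitary_carrier unfolding clifford_gate_def by auto
    thus ?thesis using Gate by simp
  next
    case (Meas S)
    hence "herm_pauli n S" "clifford_circuit n C" using Cons.prems clifford_circuit_Cons by auto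
    hence "projector n S (w j) \<in> CM n" "kraus n C (Suc j) w \<in> CM n" using Cons.IH herm_carrier projector_carrier by auto
    thus ?thesis using Meas by simp
  qed
qed

lemma kraus_gate: "clifford_circuit n C \<Longrightarrow> U \<in> CM n \<Longrightarrow> M \<in> CM n \<Longrightarrow>
   kraus n (Gate U # C) j w * M = kraus n C j w * (U * M)"
  using cmD[OF kraus_carrier, of n C j w] cmD[of U] cmD[of M] by (simp add: malg)

lemma kraus_meas: "clifford_circuit n C \<Longrightarrow> S \<in> CM n \<Longrightarrow> M \<in> CM n \<Longrightarrow>
   kraus n (Meas S # C) j w * M = kraus n C (Suc j) w * (projector n S (w j) * M)"
  using cmD[OF kraus_carrier, of n C "Suc j" w] cmD[OF projector_carrier, of S n "w j"] cmD[of M]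
  by (simp add: malg)

lemma kraus_zero: "clifford_circuit n C \<Longrightarrow> kraus n C j w * 0\<^sub>m (2^n) (2^n) = 0\<^sub>m (2^n) (2^n)"
  using cmD[OF kraus_carrier, of n C j w] by simp

lemma kraus_cong: "(\<forall>k\<ge>j. w k = w' k) \<Longrightarrow> kraus n C j w = kraus n C j w'"
proof (induction C arbitrary: j)
  case Nil thus ?case by simp
next
  case (Cons op C)
  show ?case
  proof (cases op)
    case (Gate U) thus ?thesis using Cons by simp
  next
    case (Meas S)
    have "kraus n C (Suc j) w = kraus n C (Suc j) w'" using Cons by simp
    moreover have "w j = w' j" using Cons.prems by simp
    ultimately show ?thesis using Meas by simp
  qed
qed

section \<open>Runs\<close>

lemma run_mono: "alg_run n st C Rf \<Longrightarrow> st = (SL, R, j) \<Longrightarrow> set R \<subseteq> set Rf"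
proof (induction arbitrary: SL R j rule: alg_run.induct)
  case (run_nil SL R j) thus ?case by simp
next
  case (run_cons st op st' C Rf)
  obtain SL' R' j' where st': "st' = (SL', R', j')" by (cases st') auto
  have "set R \<subseteq> set R'" using run_cons.hyps(1) unfolding run_cons.prems st'
    by (cases rule: alg_step.cases) auto
  thus ?case using run_cons.IH[OF st'] by auto
qed

lemma sound_run:
  "alg_run n st C Rf \<Longrightarrow> st = (SL, R, j) \<Longrightarrow> clifford_circuit n C \<Longrightarrow> goodSL n SL \<Longrightarrow> M \<in> CM n \<Longrightarrow>
   (\<forall>p\<in>set SL. fst p * M = sg w (snd p) \<cdot>\<^sub>m M) \<Longrightarrow> kraus n C j w * M \<noteq> 0\<^sub>m (2^n) (2^n) \<Longrightarrow>
   (\<forall>e\<in>set R. sat_eq w e) \<Longrightarrow> (\<forall>e\<in>set Rf. sat_eq w e)"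
proof (induction arbitrary: SL R j M rule: alg_run.induct)
  case (run_nil SL R j) thus ?case by simp
next
  case (run_cons st op st' C Rf)
  obtain SL' R' j' where st': "st' = (SL', R', j')" by (cases st') auto
  have step: "alg_step n (SL, R, j) op (SL', R', j')" using run_cons.hyps(1) run_cons.prems(1) st' by simp
  have cc: "clifford_circuit n C" using run_cons.prems(2) unfolding clifford_circuit_def by auto
  note IH = run_cons.IH[OF st' cc]
  from step show ?case
  proof (cases rule: alg_step.cases)
    case (gate U)
    have U: "clifford_gate n U" using run_cons.prems(2) gate unfolding clifford_circuit_def by auto
    have Uc: "U \<in> CM n" using U unitary_carrier unfolding clifford_gate_def by blast
    show ?thesis
    proof (rule IH)
      show "goodSL n SL'" using gate gate_good[OF U run_cons.prems(3)] by simp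
      show "U * M \<in> CM n" using Uc run_cons.prems(4) by simp
      show "\<forall>p\<in>set SL'. fst p * (U * M) = sg w (snd p) \<cdot>\<^sub>m (U * M)"
        using gate sound_gate[OF U run_cons.prems(3,4,5)] by simp
      show "kraus n C j' w * (U * M) \<noteq> 0\<^sub>m (2^n) (2^n)"
        using run_cons.prems(6) gate kraus_gate[OF cc Uc run_cons.prems(4)] by simp
      show "\<forall>e\<in>set R'. sat_eq w e" using run_cons.prems(7) gate by simp
    qed
  next
    case (meas_a S \<epsilon> I)
    have S: "herm_pauli n S" using run_cons.prems(2) meas_a unfolding clifford_circuit_def by auto
    have Sc: "S \<in> CM n" using S herm_carrier by blast
    note sa = sound_meas_a[OF S run_cons.prems(3,4,5) meas_a(6,8), of j]
    have nz: "kraus n C j' w * (projector n S (w j) * M) \<noteq> 0\<^sub>m (2^n) (2^n)"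
      using run_cons.prems(6) meas_a kraus_meas[OF cc Sc run_cons.prems(4)] by simp
    have nz': "projector n S (w j) * M \<noteq> 0\<^sub>m (2^n) (2^n)"
      using nz kraus_zero[OF cc] by auto
    show ?thesis
    proof (rule IH)
      show "goodSL n SL'" using meas_a run_cons.prems(3) by simp
      show "projector n S (w j) * M \<in> CM n" by (rule mult_carrier_mat[OF projector_carrier[OF Sc] run_cons.prems(4)])
      show "\<forall>p\<in>set SL'. fst p * (projector n S (w j) * M) = sg w (snd p) \<cdot>\<^sub>m (projector n S (w j) * M)"
        using sa(1) meas_a by simp
      show "kraus n C j' w * (projector n S (w j) * M) \<noteq> 0\<^sub>m (2^n) (2^n)" by (rule nz)
      show "\<forall>e\<in>set R'. sat_eq w e" using run_cons.prems(7) meas_a sa(2)[OF nz'] by auto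
    qed
  next
    case (meas_b1 S i T K)
    have S: "herm_pauli n S" using run_cons.prems(2) meas_b1 unfolding clifford_circuit_def by auto
    have Sc: "S \<in> CM n" using S herm_carrier by blast
    have SL'e: "SL' = map (fb T K S) (take i SL @ drop (Suc i) SL) @ [(S, {j})]"
      using meas_b1 unfolding fb_def by simp
    show ?thesis
    proof (rule IH)
      show "goodSL n SL'" unfolding SL'e by (rule b1_good[OF S run_cons.prems(3) meas_b1(6,7,8)])
      show "projector n S (w j) * M \<in> CM n" by (rule mult_carrier_mat[OF projector_carrier[OF Sc] run_cons.prems(4)])
      show "\<forall>p\<in>set SL'. fst p * (projector n S (w j) * M) = sg w (snd p) \<cdot>\<^sub>m (projector n S (w j) * M)"
        unfolding SL'e by (rule sound_meas_b1[OF S run_cons.prems(3,4,5) meas_b1(6,7,8)])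
      show "kraus n C j' w * (projector n S (w j) * M) \<noteq> 0\<^sub>m (2^n) (2^n)"
        using run_cons.prems(6) meas_b1 kraus_meas[OF cc Sc run_cons.prems(4)] by simp
      show "\<forall>e\<in>set R'. sat_eq w e" using run_cons.prems(7) meas_b1 by simp
    qed
  next
    case (meas_b2 S)
    have S: "herm_pauli n S" using run_cons.prems(2) meas_b2 unfolding clifford_circuit_def by auto
    have Sc: "S \<in> CM n" using S herm_carrier by blast
    show ?thesis
    proof (rule IH)
      show "goodSL n SL'" using meas_b2 b2_good[OF S run_cons.prems(3) meas_b2(6)] by simp
      show "projector n S (w j) * M \<in> CM n" by (rule mult_carrier_mat[OF projector_carrier[OF Sc] run_cons.prems(4)])
      show "\<forall>p\<in>set SL'. fst p * (projector n S (w j) * M) = sg w (snd p) \<cdot>\<^sub>m (projector n S (w j) * M)"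
        using meas_b2 sound_meas_b2[OF S run_cons.prems(3,4,5) meas_b2(6)] by simp
      show "kraus n C j' w * (projector n S (w j) * M) \<noteq> 0\<^sub>m (2^n) (2^n)"
        using run_cons.prems(6) meas_b2 kraus_meas[OF cc Sc run_cons.prems(4)] by simp
      show "\<forall>e\<in>set R'. sat_eq w e" using run_cons.prems(7) meas_b2 by simp
    qed
  qed
qed


lemma tr_zero: "tr (0\<^sub>m N N) = 0"
  unfolding tr_def by simp

lemma compl_run:
  "alg_run n st C Rf \<Longrightarrow> st = (SL, R, j) \<Longrightarrow> clifford_circuit n C \<Longrightarrow> goodSL n SL \<Longrightarrow> M \<in> CM n \<Longrightarrow>
   X \<in> CM n \<Longrightarrow> Qm n w SL = M * X \<Longrightarrow> tr (Qm n w SL) \<noteq> 0 \<Longrightarrow>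
   (\<forall>e\<in>set Rf. sat_eq w e) \<Longrightarrow> kraus n C j w * M \<noteq> 0\<^sub>m (2^n) (2^n)"
proof (induction arbitrary: SL R j M X rule: alg_run.induct)
  case (run_nil SL0 R0 j0)
  show ?case
  proof
    assume "kraus n [] j w * M = 0\<^sub>m (2^n) (2^n)"
    hence "M = 0\<^sub>m (2^n) (2^n)" using cmD[OF run_nil.prems(4)] by simp
    hence "Qm n w SL = 0\<^sub>m (2^n) (2^n)" using run_nil.prems(6) cmD[OF run_nil.prems(5)] by simp
    thus False using run_nil.prems(7) tr_zero by simp
  qed
next
  case (run_cons st op st' C Rf)
  obtain SL' R' j' where st': "st' = (SL', R', j')" by (cases st') auto
  have step: "alg_step n (SL, R, j) op (SL', R', j')" using run_cons.hyps(1) run_cons.prems(1) st' by simp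
  have cc: "clifford_circuit n C" using run_cons.prems(2) unfolding clifford_circuit_def by auto
  have R'Rf: "set R' \<subseteq> set Rf" using run_mono[OF run_cons.hyps(2) st'] .
  note IH = run_cons.IH[OF st' cc]
  note pr = run_cons.prems
  from step show ?case
  proof (cases rule: alg_step.cases)
    case (gate U)
    have U: "clifford_gate n U" using pr(2) gate unfolding clifford_circuit_def by auto
    have Uc: "U \<in> CM n" using U unitary_carrier unfolding clifford_gate_def by blast
    obtain X' where X': "X' \<in> CM n" "Qm n w SL' = (U * M) * X'" "tr (Qm n w SL') \<noteq> 0"
      using compl_gate[OF U pr(3,4,5,6,7)] gate by auto
    have "kraus n C j' w * (U * M) \<noteq> 0\<^sub>m (2^n) (2^n)"
    proof (rule IH[where X = X'])
      show "goodSL n SL'" using gate gate_good[OF U pr(3)] by simp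
      show "U * M \<in> CM n" using Uc pr(4) by simp
      show "X' \<in> CM n" by (rule X'(1))
      show "Qm n w SL' = U * M * X'" by (rule X'(2))
      show "tr (Qm n w SL') \<noteq> 0" by (rule X'(3))
      show "\<forall>e\<in>set Rf. sat_eq w e" by (rule pr(8))
    qed
    thus ?thesis using gate kraus_gate[OF cc Uc pr(4)] by simp
  next
    case (meas_a S \<epsilon> I)
    have S: "herm_pauli n S" using pr(2) meas_a unfolding clifford_circuit_def by auto
    have Sc: "S \<in> CM n" using S herm_carrier by blast
    have sat: "sat_eq w (symd {j} (symdiff_list (map snd (nths SL I))), \<epsilon> = -1)"
      using R'Rf pr(8) meas_a by auto
    have e: "Qm n w SL = (projector n S (w j) * M) * X"
      by (rule compl_meas_a[OF S pr(3,4,5,6) meas_a(6,8) sat])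
    have "kraus n C j' w * (projector n S (w j) * M) \<noteq> 0\<^sub>m (2^n) (2^n)"
    proof (rule IH[where X = X])
      show "projector n S (w j) * M \<in> CM n" by (rule mult_carrier_mat[OF projector_carrier[OF Sc] pr(4)])
      show "goodSL n SL'" using meas_a(2) pr(3) by simp
      show "X \<in> CM n" by (rule pr(5))
      show "Qm n w SL' = projector n S (w j) * M * X" using meas_a(2) e by simp
      show "tr (Qm n w SL') \<noteq> 0" using meas_a(2) pr(7) by simp
      show "\<forall>e\<in>set Rf. sat_eq w e" by (rule pr(8))
    qed
    thus ?thesis using meas_a kraus_meas[OF cc Sc pr(4)] by simp
  next
    case (meas_b1 S i T K)
    have S: "herm_pauli n S" using pr(2) meas_b1 unfolding clifford_circuit_def by auto
    have Sc: "S \<in> CM n" using S herm_carrier by blast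
    have SL'e: "SL' = map (fb T K S) (take i SL @ drop (Suc i) SL) @ [(S, {j})]"
      using meas_b1 unfolding fb_def by simp
    obtain X' where X': "X' \<in> CM n" "Qm n w SL' = (projector n S (w j) * M) * X'" "tr (Qm n w SL') \<noteq> 0"
      using compl_meas_b1[OF S pr(3,4,5,6,7) meas_b1(6,7,8), of j] unfolding SL'e by auto
    have "kraus n C j' w * (projector n S (w j) * M) \<noteq> 0\<^sub>m (2^n) (2^n)"
    proof (rule IH[where X = X'])
      show "goodSL n SL'" unfolding SL'e by (rule b1_good[OF S pr(3) meas_b1(6,7,8)])
      show "projector n S (w j) * M \<in> CM n" by (rule mult_carrier_mat[OF projector_carrier[OF Sc] pr(4)])
      show "X' \<in> CM n" by (rule X'(1))
      show "Qm n w SL' = projector n S (w j) * M * X'" by (rule X'(2))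
      show "tr (Qm n w SL') \<noteq> 0" by (rule X'(3))
      show "\<forall>e\<in>set Rf. sat_eq w e" by (rule pr(8))
    qed
    thus ?thesis using meas_b1 kraus_meas[OF cc Sc pr(4)] by simp
  next
    case (meas_b2 S)
    have S: "herm_pauli n S" using pr(2) meas_b2 unfolding clifford_circuit_def by auto
    have Sc: "S \<in> CM n" using S herm_carrier by blast
    obtain X' where X': "X' \<in> CM n" "Qm n w SL' = (projector n S (w j) * M) * X'" "tr (Qm n w SL') \<noteq> 0"
      using compl_meas_b2[OF S pr(3,4,5,6,7) meas_b2(5,6), of j] meas_b2 by auto
    have "kraus n C j' w * (projector n S (w j) * M) \<noteq> 0\<^sub>m (2^n) (2^n)"
    proof (rule IH[where X = X'])
      show "goodSL n SL'" using meas_b2 b2_good[OF S pr(3) meas_b2(6)] by simp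
      show "projector n S (w j) * M \<in> CM n" by (rule mult_carrier_mat[OF projector_carrier[OF Sc] pr(4)])
      show "X' \<in> CM n" by (rule X'(1))
      show "Qm n w SL' = projector n S (w j) * M * X'" by (rule X'(2))
      show "tr (Qm n w SL') \<noteq> 0" by (rule X'(3))
      show "\<forall>e\<in>set Rf. sat_eq w e" by (rule pr(8))
    qed
    thus ?thesis using meas_b2 kraus_meas[OF cc Sc pr(4)] by simp
  qed
qed

lemma exist_run: "clifford_circuit n C \<Longrightarrow> goodSL n SL \<Longrightarrow> \<exists>Rf. alg_run n (SL, R, j) C Rf"
proof (induction C arbitrary: SL R j)
  case Nil
  have "alg_run n (SL, R, j) [] R" by (rule alg_run.run_nil)
  thus ?case by blast
next
  case (Cons op C)
  have cc: "clifford_circuit n C" using Cons.prems(1) unfolding clifford_circuit_def by auto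
  show ?case
  proof (cases op)
    case (Gate U)
    have U: "clifford_gate n U" using Cons.prems(1) Gate unfolding clifford_circuit_def by auto
    obtain Rf where r: "alg_run n (map (\<lambda>(T, K). (U * T * mat_adjoint U, K)) SL, R, j) C Rf"
      using Cons.IH[OF cc gate_good[OF U Cons.prems(2)]] by blast
    have "alg_run n (SL, R, j) (Gate U # C) Rf" by (rule alg_run.run_cons[OF alg_step.gate r])
    thus ?thesis unfolding Gate by blast
  next
    case (Meas S)
    have S: "herm_pauli n S" using Cons.prems(1) Meas unfolding clifford_circuit_def by auto
    have ci: "ci n (map fst SL)" using Cons.prems(2) unfolding goodSL_def by auto
    show ?thesis
    proof (cases "S \<in> gen_group n (map fst SL) \<or> - S \<in> gen_group n (map fst SL)")
      case True
      have "\<exists>\<epsilon> I. (\<epsilon> = 1 \<or> \<epsilon> = -1) \<and> I \<subseteq> {..<length SL} \<and> \<epsilon> \<cdot>\<^sub>m S = prod_mats n (map fst (nths SL I))"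
      proof (cases "S \<in> gen_group n (map fst SL)")
        case True
        have "\<exists>I. I \<subseteq> {..<length (map fst SL)} \<and> S = prod_mats n (nths (map fst SL) I)"
          by (rule group_rep[OF True ci])
        then obtain I where "I \<subseteq> {..<length SL}" "S = prod_mats n (nths (map fst SL) I)" by auto
        thus ?thesis by (intro exI[of _ 1] exI[of _ I]) (simp add: nths_map)
      next
        case False
        hence m: "- S \<in> gen_group n (map fst SL)" using \<open>S \<in> gen_group n (map fst SL) \<or> - S \<in> gen_group n (map fst SL)\<close> by blast
        have "\<exists>I. I \<subseteq> {..<length (map fst SL)} \<and> - S = prod_mats n (nths (map fst SL) I)"
          by (rule group_rep[OF m ci])
        then obtain I where "I \<subseteq> {..<length SL}" "- S = prod_mats n (nths (map fst SL) I)" by auto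
        thus ?thesis by (intro exI[of _ "-1"] exI[of _ I]) (simp add: nths_map smult_mone_mat)
      qed
      then obtain \<epsilon> I where eI: "\<epsilon> = 1 \<or> \<epsilon> = -1" "I \<subseteq> {..<length SL}" "\<epsilon> \<cdot>\<^sub>m S = prod_mats n (map fst (nths SL I))"
        by blast
      obtain Rf where r: "alg_run n (SL, R @ [(symd {j} (symdiff_list (map snd (nths SL I))), \<epsilon> = -1)], Suc j) C Rf"
        using Cons.IH[OF cc Cons.prems(2)] by blast
      have "alg_run n (SL, R, j) (Meas S # C) Rf" by (rule alg_run.run_cons[OF alg_step.meas_a[OF True eI] r])
      thus ?thesis unfolding Meas by blast
    next
      case ng: False
      show ?thesis
      proof (cases "\<exists>T\<in>set (map fst SL). anticommute T S")
        case True
        then obtain T0 where T0: "T0 \<in> set (map fst SL)" "anticommute T0 S" by blast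
        then obtain i where i: "i < length (map fst SL)" "map fst SL ! i = T0" by (metis in_set_conv_nth)
        define T where "T = fst (SL ! i)"
        define K where "K = snd (SL ! i)"
        have il: "i < length SL" using i by simp
        have Ti: "SL ! i = (T, K)" unfolding T_def K_def by simp
        have aT: "anticommute T S" using i T0 il unfolding T_def by simp
        have g': "goodSL n (map (fb T K S) (take i SL @ drop (Suc i) SL) @ [(S, {j})])"
          by (rule b1_good[OF S Cons.prems(2) il Ti aT])
        obtain Rf where r: "alg_run n (map (fb T K S) (take i SL @ drop (Suc i) SL) @ [(S, {j})], R, Suc j) C Rf"
          using Cons.IH[OF cc g'] by blast
        have st: "alg_step n (SL, R, j) (Meas S) (map (fb T K S) (take i SL @ drop (Suc i) SL) @ [(S, {j})], R, Suc j)"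
          using alg_step.meas_b1[OF ng il Ti aT, of R j] unfolding fb_def .
        have "alg_run n (SL, R, j) (Meas S # C) Rf" by (rule alg_run.run_cons[OF st r])
        thus ?thesis unfolding Meas by blast
      next
        case False
        hence na: "\<forall>T\<in>set (map fst SL). \<not> anticommute T S" by blast
        obtain Rf where r: "alg_run n (SL @ [(S, {j})], R, Suc j) C Rf"
          using Cons.IH[OF cc b2_good[OF S Cons.prems(2) na]] by blast
        have "alg_run n (SL, R, j) (Meas S # C) Rf" by (rule alg_run.run_cons[OF alg_step.meas_b2[OF ng na] r])
        thus ?thesis unfolding Meas by blast
      qed
    qed
  qed
qed


lemma pr_sum: "S \<in> CM n \<Longrightarrow> pr n S 1 + pr n S (-1) = 1\<^sub>m (2^n)"
  unfolding pr_def by (rule eq_matI) (auto simp: field_simps)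

lemma exists_nonzero:
  "clifford_circuit n C \<Longrightarrow> M \<in> CM n \<Longrightarrow> M \<noteq> 0\<^sub>m (2^n) (2^n) \<Longrightarrow>
   \<exists>w. (\<forall>k. (k < j \<or> j + num_meas C \<le> k) \<longrightarrow> \<not> w k) \<and> kraus n C j w * M \<noteq> 0\<^sub>m (2^n) (2^n)"
proof (induction C arbitrary: j M)
  case Nil
  show ?case using Nil.prems cmD[OF Nil.prems(2)] by (intro exI[of _ "\<lambda>_. False"]) simp
next
  case (Cons op C)
  have cc: "clifford_circuit n C" using Cons.prems(1) unfolding clifford_circuit_def by auto
  show ?case
  proof (cases op)
    case (Gate U)
    have U: "clifford_gate n U" using Cons.prems(1) Gate unfolding clifford_circuit_def by auto
    have Uu: "unitary_n n U" using U unfolding clifford_gate_def by auto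
    have Uc: "U \<in> CM n" "mat_adjoint U \<in> CM n" using unitary_carrier[OF Uu] by auto
    have UM: "U * M \<noteq> 0\<^sub>m (2^n) (2^n)"
    proof
      assume "U * M = 0\<^sub>m (2^n) (2^n)"
      hence "mat_adjoint U * (U * M) = 0\<^sub>m (2^n) (2^n)" using cmD[OF Uc(2)] by simp
      thus False using adjU_cancel[OF Uu] cmD[OF Cons.prems(2)] Cons.prems(3) by simp
    qed
    obtain w where w: "\<forall>k. (k < j \<or> j + num_meas C \<le> k) \<longrightarrow> \<not> w k" "kraus n C j w * (U * M) \<noteq> 0\<^sub>m (2^n) (2^n)"
      using Cons.IH[OF cc _ UM] Uc Cons.prems(2) by auto
    thus ?thesis using Gate kraus_gate[OF cc Uc(1) Cons.prems(2)] by (intro exI[of _ w]) simp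
  next
    case (Meas S)
    have S: "herm_pauli n S" using Cons.prems(1) Meas unfolding clifford_circuit_def by auto
    have Sc: "S \<in> CM n" using S herm_carrier by blast
    have "\<exists>b. projector n S b * M \<noteq> 0\<^sub>m (2^n) (2^n)"
    proof (rule ccontr)
      assume "\<not> ?thesis"
      hence z: "pr n S 1 * M = 0\<^sub>m (2^n) (2^n)" "pr n S (-1) * M = 0\<^sub>m (2^n) (2^n)"
        unfolding projector_pr by (metis (full_types))+
      have "M = (pr n S 1 + pr n S (-1)) * M" unfolding pr_sum[OF Sc] using cmD[OF Cons.prems(2)] by simp
      also have "\<dots> = pr n S 1 * M + pr n S (-1) * M"
        using cmD[OF pr_carrier[OF Sc]] cmD[OF Cons.prems(2)] by (simp add: add_mult_dim)
      also have "\<dots> = 0\<^sub>m (2^n) (2^n)" unfolding z by simp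
      finally show False using Cons.prems(3) by simp
    qed
    then obtain b where b: "projector n S b * M \<noteq> 0\<^sub>m (2^n) (2^n)" by blast
    have Pc: "projector n S b * M \<in> CM n" by (rule mult_carrier_mat[OF projector_carrier[OF Sc] Cons.prems(2)])
    obtain w' where w': "\<forall>k. (k < Suc j \<or> Suc j + num_meas C \<le> k) \<longrightarrow> \<not> w' k"
      "kraus n C (Suc j) w' * (projector n S b * M) \<noteq> 0\<^sub>m (2^n) (2^n)"
      using Cons.IH[OF cc Pc b] by blast
    define w where "w = w'(j := b)"
    have kc: "kraus n C (Suc j) w = kraus n C (Suc j) w'" unfolding w_def by (rule kraus_cong) simp
    show ?thesis
    proof (intro exI conjI)
      show "\<forall>k. (k < j \<or> j + num_meas (op # C) \<le> k) \<longrightarrow> \<not> w k"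
        using w'(1) Meas unfolding w_def by auto
      show "kraus n (op # C) j w * M \<noteq> 0\<^sub>m (2^n) (2^n)"
        using Meas kraus_meas[OF cc Sc Cons.prems(2), of j w] kc w'(2) unfolding w_def by simp
    qed
  qed
qed

lemma vnorm2_ge: "r < dim_vec v \<Longrightarrow> (cmod (v $ r))^2 \<le> vnorm2 v"
  unfolding vnorm2_def by (rule member_le_sum) auto

lemma outcome_iff:
  assumes cc: "clifford_circuit n C"
  shows "w \<in> outcome_set n C \<longleftrightarrow> w \<in> bitstrings (num_meas C) \<and> kraus n C 0 w \<noteq> 0\<^sub>m (2^n) (2^n)"
proof -
  have K: "kraus n C 0 w \<in> CM n" by (rule kraus_carrier[OF cc])
  show ?thesis
  proof
    assume "w \<in> outcome_set n C"
    then obtain psi where w: "w \<in> bitstrings (num_meas C)" and psi: "psi \<in> carrier_vec (2^n)"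
      and nz: "outcome_prob n C w psi \<noteq> 0" unfolding outcome_set_def by auto
    have "kraus n C 0 w \<noteq> 0\<^sub>m (2^n) (2^n)"
    proof
      assume z: "kraus n C 0 w = 0\<^sub>m (2^n) (2^n)"
      have "vnorm2 (0\<^sub>m (2^n) (2^n) *\<^sub>v psi) = 0"
        unfolding vnorm2_def using psi by (simp add: scalar_prod_def)
      thus False using nz z unfolding outcome_prob_def by simp
    qed
    thus "w \<in> bitstrings (num_meas C) \<and> kraus n C 0 w \<noteq> 0\<^sub>m (2^n) (2^n)" using w by simp
  next
    assume h: "w \<in> bitstrings (num_meas C) \<and> kraus n C 0 w \<noteq> 0\<^sub>m (2^n) (2^n)"
    have "\<exists>r c. r < 2^n \<and> c < 2^n \<and> kraus n C 0 w $$ (r, c) \<noteq> 0"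
    proof (rule ccontr)
      assume "\<not> (\<exists>r c. r < 2^n \<and> c < 2^n \<and> kraus n C 0 w $$ (r, c) \<noteq> 0)"
      hence "\<forall>r c. r < 2^n \<longrightarrow> c < 2^n \<longrightarrow> kraus n C 0 w $$ (r, c) = 0" by blast
      hence "kraus n C 0 w = 0\<^sub>m (2^n) (2^n)" using K by (intro eq_matI) auto
      thus False using h by simp
    qed
    then obtain r c where rc: "r < 2^n" "c < 2^n" "kraus n C 0 w $$ (r, c) \<noteq> 0" by blast
    define psi where "psi = (unit_vec (2^n) c :: complex vec)"
    have psi: "psi \<in> carrier_vec (2^n)" unfolding psi_def by simp
    have n1: "vnorm2 psi = 1"
    proof -
      have "vnorm2 psi = (\<Sum>i<2^n. (if i = c then 1 else 0))"
        unfolding vnorm2_def psi_def using rc(2) by (intro sum.cong) auto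
      also have "\<dots> = 1" using rc(2) by simp
      finally show ?thesis .
    qed
    have e: "(kraus n C 0 w *\<^sub>v psi) $ r = kraus n C 0 w $$ (r, c)"
      unfolding psi_def using K rc by simp
    have "0 < (cmod ((kraus n C 0 w *\<^sub>v psi) $ r))^2" unfolding e using rc(3) by simp
    also have "\<dots> \<le> outcome_prob n C w psi" unfolding outcome_prob_def
      by (rule vnorm2_ge) (use K rc in simp)
    finally have "outcome_prob n C w psi \<noteq> 0" by simp
    thus "w \<in> outcome_set n C" unfolding outcome_set_def using h psi n1 by auto
  qed
qed

lemma main_char:
  assumes cc: "clifford_circuit n C" and R: "outcome_code n C R"
  shows "outcome_set n C = {w \<in> bitstrings (num_meas C). \<forall>e\<in>set R. sat_eq w e}"
proof -
  have run: "alg_run n ([], [], 0) C R" using R unfolding outcome_code_def .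
  have g0: "goodSL n []" unfolding goodSL_def ci_def by simp
  have I: "1\<^sub>m (2^n) \<in> CM n" by simp
  show ?thesis
  proof (rule equalityI; rule subsetI)
    fix w assume "w \<in> outcome_set n C"
    hence w: "w \<in> bitstrings (num_meas C)" "kraus n C 0 w \<noteq> 0\<^sub>m (2^n) (2^n)" using outcome_iff[OF cc] by auto
    have "\<forall>e\<in>set R. sat_eq w e"
      by (rule sound_run[OF run refl cc g0 I]) (use w(2) cmD[OF kraus_carrier[OF cc]] in simp_all)
    thus "w \<in> {w \<in> bitstrings (num_meas C). \<forall>e\<in>set R. sat_eq w e}" using w by simp
  next
    fix w assume "w \<in> {w \<in> bitstrings (num_meas C). \<forall>e\<in>set R. sat_eq w e}"
    hence w: "w \<in> bitstrings (num_meas C)" "\<forall>e\<in>set R. sat_eq w e" by auto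
    have "kraus n C 0 w * 1\<^sub>m (2^n) \<noteq> 0\<^sub>m (2^n) (2^n)"
      by (rule compl_run[OF run refl cc g0 I I]) (use w(2) tr_one in simp_all)
    hence "kraus n C 0 w \<noteq> 0\<^sub>m (2^n) (2^n)" using cmD[OF kraus_carrier[OF cc]] by simp
    thus "w \<in> outcome_set n C" using w outcome_iff[OF cc] by simp
  qed
qed

lemma sat_xor3:
  assumes a: "a \<in> bitstrings m" and u: "u \<in> bitstrings m" and v: "v \<in> bitstrings m"
    and sa: "sat_eq a e" and su: "sat_eq u e" and sv: "sat_eq v e"
  shows "sat_eq (\<lambda>k. (a k \<noteq> u k) \<noteq> v k) e"
proof -
  obtain K c where e: "e = (K, c)" by force
  have fin: "finite {k \<in> K. x k}" if "x \<in> bitstrings m" for x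
  proof (rule finite_subset[of _ "{..<m}"])
    show "{k \<in> K. x k} \<subseteq> {..<m}" using that unfolding bitstrings_def by (auto simp: not_le[symmetric])
  qed simp
  define A1 where "A1 = {k \<in> K. a k}"
  define A2 where "A2 = {k \<in> K. u k}"
  define A3 where "A3 = {k \<in> K. v k}"
  have f1: "finite A1" unfolding A1_def by (rule fin[OF a])
  have f2: "finite A2" unfolding A2_def by (rule fin[OF u])
  have f3: "finite A3" unfolding A3_def by (rule fin[OF v])
  have f12: "finite (sym_diff A1 A2)" using f1 f2 by blast
  have s1: "{k \<in> K. (a k \<noteq> u k) \<noteq> v k} = sym_diff (sym_diff A1 A2) A3"
    unfolding A1_def A2_def A3_def by blast
  have c1: "even (card (sym_diff (sym_diff A1 A2) A3)) \<longleftrightarrow> (even (card (sym_diff A1 A2)) \<longleftrightarrow> even (card A3))"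
    by (rule card_symd_even[OF f12 f3])
  have c2: "even (card (sym_diff A1 A2)) \<longleftrightarrow> (even (card A1) \<longleftrightarrow> even (card A2))"
    by (rule card_symd_even[OF f1 f2])
  have h1: "odd (card A1) = c" using sa unfolding e sat_eq_def A1_def by simp
  have h2: "odd (card A2) = c" using su unfolding e sat_eq_def A2_def by simp
  have h3: "odd (card A3) = c" using sv unfolding e sat_eq_def A3_def by simp
  have "odd (card {k \<in> K. (a k \<noteq> u k) \<noteq> v k}) = c" unfolding s1 using c1 c2 h1 h2 h3 by blast
  thus ?thesis unfolding e sat_eq_def by simp
qed

lemma affine_sol:
  assumes a: "a \<in> A" and A: "A = {w \<in> bitstrings m. \<forall>e\<in>set R. sat_eq w e}"
  shows "affine_subspace2 m A"
  unfolding affine_subspace2_def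
proof (intro exI conjI)
  have ab: "a \<in> bitstrings m" using a A by auto
  show "a \<in> bitstrings m" by (rule ab)
  have bb: "bxor x y \<in> bitstrings m" if "x \<in> bitstrings m" "y \<in> bitstrings m" for x y
    using that unfolding bitstrings_def bxor_def by auto
  have bxx: "bxor x (bxor x y) = y" for x y unfolding bxor_def by auto
  show "linear_subspace2 m (bxor a ` A)"
    unfolding linear_subspace2_def
  proof (intro conjI)
    show "bxor a ` A \<subseteq> bitstrings m" using A ab bb by auto
    have "bxor a a = (\<lambda>_. False)" unfolding bxor_def by auto
    thus "(\<lambda>_. False) \<in> bxor a ` A" using a by force
    show "\<forall>x\<in>bxor a ` A. \<forall>y\<in>bxor a ` A. bxor x y \<in> bxor a ` A"
    proof (intro ballI)
      fix x y assume "x \<in> bxor a ` A" "y \<in> bxor a ` A"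
      then obtain u v where uv: "u \<in> A" "v \<in> A" "x = bxor a u" "y = bxor a v" by auto
      define z where "z = (\<lambda>k. (a k \<noteq> u k) \<noteq> v k)"
      have zA: "z \<in> A" unfolding A
      proof (intro CollectI conjI ballI)
        have "z = bxor (bxor a u) v" unfolding z_def bxor_def by auto
        thus "z \<in> bitstrings m" using bb ab uv A by auto
        fix e assume "e \<in> set R"
        hence "sat_eq a e" "sat_eq u e" "sat_eq v e" using a uv A by auto
        moreover have "u \<in> bitstrings m" "v \<in> bitstrings m" using uv A by auto
        ultimately show "sat_eq z e" unfolding z_def by (intro sat_xor3[OF ab]) auto
      qed
      have "bxor x y = bxor a z" unfolding uv z_def bxor_def by auto
      thus "bxor x y \<in> bxor a ` A" using zA by auto
    qed
  qed
  show "A = bxor a ` (bxor a ` A)" by (auto simp: bxx image_iff)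
qed

theorem mainTheorem1:
  fixes n :: nat and C :: "operation list"
  assumes "clifford_circuit n C"
  shows "affine_subspace2 (num_meas C) (outcome_set n C) \<and>
         (\<exists>R. outcome_code n C R) \<and>
         (\<forall>R. outcome_code n C R \<longrightarrow>
              outcome_set n C = {w \<in> bitstrings (num_meas C). \<forall>e\<in>set R. sat_eq w e})"
proof -
  have g0: "goodSL n []" unfolding goodSL_def ci_def by simp
  obtain R where R: "outcome_code n C R" using exist_run[OF assms g0] unfolding outcome_code_def by blast
  have ch: "\<forall>R. outcome_code n C R \<longrightarrow>
              outcome_set n C = {w \<in> bitstrings (num_meas C). \<forall>e\<in>set R. sat_eq w e}"
    using main_char[OF assms] by blast
  obtain w where w: "\<forall>k. (k < 0 \<or> 0 + num_meas C \<le> k) \<longrightarrow> \<not> w k" "kraus n C 0 w * 1\<^sub>m (2^n) \<noteq> 0\<^sub>m (2^n) (2^n)"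
  proof -
    have "(1\<^sub>m (2^n) :: complex mat) \<noteq> 0\<^sub>m (2^n) (2^n)"
    proof
      assume "(1\<^sub>m (2^n) :: complex mat) = 0\<^sub>m (2^n) (2^n)"
      hence "(1\<^sub>m (2^n) :: complex mat) $$ (0, 0) = 0\<^sub>m (2^n) (2^n) $$ (0, 0)" by simp
      thus False by simp
    qed
    thus ?thesis using exists_nonzero[OF assms, of "1\<^sub>m (2^n)" 0] that by auto
  qed
  have "w \<in> outcome_set n C"
    using w cmD[OF kraus_carrier[OF assms]] outcome_iff[OF assms] unfolding bitstrings_def by auto
  hence "affine_subspace2 (num_meas C) (outcome_set n C)"
    using ch R by (intro affine_sol[of w]) auto
  thus ?thesis using R ch by blast
qed


end
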